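(* Let $\mathcal{M}$ be an ergodic (not necessarily reversible) Markov chain on a finite state space $\Omega$ with stationary distribution $\pi$, and let $\mathcal{M}'$ be a reversible ergodic Markov chain on $\Omega$ with the same stationary distribution. Let $f$ be an $(\mathcal{M},\mathcal{M}')$-flow. Then for every $\varepsilon>0$ and $x\in\Omega$, $$\tau_x(\widetilde{\mathcal{M}},\varepsilon)\ \le\ \frac{A(f)}{2}\left[\tau\Big(\mathcal{M}',\frac{1}{2e}\Big)+1\right]\ln\left(\frac{1}{\varepsilon^2\pi(x)}\right).$$
   Context: A (discrete-time) Markov chain on a finite state space $\Omega$ with transition matrix $P$ is ergodic if irreducible and aperiodic; it then has a unique stationary distribution $\pi>0$; reversible means $\pi(x)P(x,y)=\pi(y)P(y,x)$. Variation distance: $\|\theta_1-\theta_2\|=\frac12\sum_i|\theta_1(i)-\theta_2(i)|$. Discrete mixing time: $\tau_x(\mathcal{M},\varepsilon)=\min\{t>0 \text{ integer}: \|P^{t'}(x,\cdot)-\pi\|\le\varepsilon \ \forall t'\ge t\}$, $\tau(\mathcal{M},\varepsilon)=\max_x\tau_x(\mathcal{M},\varepsilon)$. Continuization $\widetilde{\mathcal{M}}$: with $Q=P-I$, time-$t$ transition matrix $\exp(Qt)$; $\tau_x(\widetilde{\mathcal{M}},\varepsilon)=\inf\{t>0: \|v_x\exp(Qt')-\pi\|\le\varepsilon \ \forall \text{ real } t'\ge t\}$ ($v_x$ the unit row vector at $x$). Flows: Let $\mathcal{M}$ have transition matrix $P$ and stationary distribution $\pi$, and $\mathcal{M}'$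 have transition matrix $P'$ and stationary distribution $\pi'$. Let $E^*(\mathcal{M})=\{(x,y): P(x,y)>0\}$ (pairs not necessarily distinct), similarly $E^*(\mathcal{M}')$. For $(x,y)\in E^*(\mathcal{M}')$, $\mathcal{P}_{x,y}$ is the set of paths $\gamma=(x=x_0,\dots,x_k=y)$ with each $(x_i,x_{i+1})\in E^*(\mathcal{M})$ and each $(z,w)\in E^*(\mathcal{M})$ appearing at most twice as a consecutive pair on $\gamma$; $|\gamma|=k$. $\mathcal{P}=\bigcup_{(x,y)\in E^*(\mathcal{M}')}\mathcal{P}_{x,y}$. An $(\mathcal{M},\mathcal{M}')$-flow is $f:\mathcal{P}\to[0,1]$ with $\sum_{\gamma\in\mathcal{P}_{x,y}}f(\gamma)=\pi'(x)P'(x,y)$ for all $(x,y)\in E^*(\mathcal{M}')$. With $r((z,w),\gamma)$ the number of times $(z,w)$ appears on $\gamma$, $A_{z,w}(f)=\frac{1}{\pi(z)P(z,w)}\sum_{\gamma:(z,w)\in\gamma}r((z,w),\gamma)|\gamma|f(\gamma)$ and $A(f)=\max_{(z,w)\in E^*(\mathcal{M})}A_{z,w}(f)$. *)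

theory Defs
  imports "HOL-Analysis.Analysis"
begin

text \<open>State space: a finite type 'a (Omega = UNIV). Transition matrices are functions
  'a => 'a => real.\<close>

definition stochastic :: "('a::finite \<Rightarrow> 'a \<Rightarrow> real) \<Rightarrow> bool" where
  "stochastic P \<longleftrightarrow> (\<forall>x y. 0 \<le> P x y) \<and> (\<forall>x. (\<Sum>y\<in>UNIV. P x y) = 1)"

fun mpow :: "('a::finite \<Rightarrow> 'a \<Rightarrow> real) \<Rightarrow> nat \<Rightarrow> 'a \<Rightarrow> 'a \<Rightarrow> real" where
  "mpow P 0 x y = (if x = y then 1 else 0)"
| "mpow P (Suc n) x y = (\<Sum>z\<in>UNIV. mpow P n x z * P z y)"

definition irreducible_chain :: "('a::finite \<Rightarrow> 'a \<Rightarrow> real) \<Rightarrow> bool" where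
  "irreducible_chain P \<longleftrightarrow> (\<forall>x y. \<exists>t. mpow P t x y > 0)"

definition aperiodic_chain :: "('a::finite \<Rightarrow> 'a \<Rightarrow> real) \<Rightarrow> bool" where
  "aperiodic_chain P \<longleftrightarrow> (\<forall>x. Gcd {t::nat. t \<ge> 1 \<and> mpow P t x x > 0} = 1)"

definition ergodic :: "('a::finite \<Rightarrow> 'a \<Rightarrow> real) \<Rightarrow> bool" where
  "ergodic P \<longleftrightarrow> stochastic P \<and> irreducible_chain P \<and> aperiodic_chain P"

definition stationary :: "('a::finite \<Rightarrow> 'a \<Rightarrow> real) \<Rightarrow> ('a \<Rightarrow> real) \<Rightarrow> bool" where
  "stationary P \<pi> \<longleftrightarrow> (\<forall>x. 0 \<le> \<pi> x) \<and> (\<Sum>x\<in>UNIV. \<pi> x) = 1 \<and>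
     (\<forall>y. (\<Sum>x\<in>UNIV. \<pi> x * P x y) = \<pi> y)"

definition reversible :: "('a::finite \<Rightarrow> 'a \<Rightarrow> real) \<Rightarrow> ('a \<Rightarrow> real) \<Rightarrow> bool" where
  "reversible P \<pi> \<longleftrightarrow> (\<forall>x y. \<pi> x * P x y = \<pi> y * P y x)"

definition tvd :: "('a::finite \<Rightarrow> real) \<Rightarrow> ('a \<Rightarrow> real) \<Rightarrow> real" where
  "tvd \<mu> \<nu> = (1/2) * (\<Sum>i\<in>UNIV. \<bar>\<mu> i - \<nu> i\<bar>)"

definition mix_time_from :: "('a::finite \<Rightarrow> 'a \<Rightarrow> real) \<Rightarrow> ('a \<Rightarrow> real) \<Rightarrow> 'a \<Rightarrow> real \<Rightarrow> nat" where
  "mix_time_from P \<pi> x \<epsilon> =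
     (LEAST t. t > 0 \<and> (\<forall>t'\<ge>t. tvd (mpow P t' x) \<pi> \<le> \<epsilon>))"

definition mix_time :: "('a::finite \<Rightarrow> 'a \<Rightarrow> real) \<Rightarrow> ('a \<Rightarrow> real) \<Rightarrow> real \<Rightarrow> nat" where
  "mix_time P \<pi> \<epsilon> = Max (range (\<lambda>x. mix_time_from P \<pi> x \<epsilon>))"

text \<open>Continuization: exp(Qt) with Q = P - I, written out as
  exp(-t) * sum_k t^k/k! P^k (valid since P and I commute).\<close>
definition cont_kernel :: "('a::finite \<Rightarrow> 'a \<Rightarrow> real) \<Rightarrow> real \<Rightarrow> 'a \<Rightarrow> 'a \<Rightarrow> real" where
  "cont_kernel P t x y = (\<Sum>k. exp (- t) * t ^ k / fact k * mpow P k x y)"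

definition cont_mix_time_from :: "('a::finite \<Rightarrow> 'a \<Rightarrow> real) \<Rightarrow> ('a \<Rightarrow> real) \<Rightarrow> 'a \<Rightarrow> real \<Rightarrow> real" where
  "cont_mix_time_from P \<pi> x \<epsilon> =
     Inf {t::real. t > 0 \<and> (\<forall>t'\<ge>t. tvd (cont_kernel P t' x) \<pi> \<le> \<epsilon>)}"

text \<open>Flows. Paths are nonempty lists of states x0 ... xk; |gamma| = k.\<close>
definition edge_set :: "('a::finite \<Rightarrow> 'a \<Rightarrow> real) \<Rightarrow> ('a \<times> 'a) set" where
  "edge_set P = {(x, y). P x y > 0}"

definition path_edges :: "'a list \<Rightarrow> ('a \<times> 'a) list" where
  "path_edges \<gamma> = zip \<gamma> (tl \<gamma>)"

definition edge_mult :: "'a \<times> 'a \<Rightarrow> 'a list \<Rightarrow> nat" where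
  "edge_mult e \<gamma> = length (filter (\<lambda>e'. e' = e) (path_edges \<gamma>))"

definition path_len :: "'a list \<Rightarrow> nat" where
  "path_len \<gamma> = length \<gamma> - 1"

definition paths_between :: "('a::finite \<Rightarrow> 'a \<Rightarrow> real) \<Rightarrow> 'a \<Rightarrow> 'a \<Rightarrow> 'a list set" where
  "paths_between P x y = {\<gamma>. \<gamma> \<noteq> [] \<and> hd \<gamma> = x \<and> last \<gamma> = y \<and>
      (\<forall>e\<in>set (path_edges \<gamma>). e \<in> edge_set P) \<and>
      (\<forall>e. edge_mult e \<gamma> \<le> 2)}"

definition all_paths :: "('a::finite \<Rightarrow> 'a \<Rightarrow> real) \<Rightarrow> ('a \<Rightarrow> 'a \<Rightarrow> real) \<Rightarrow> 'a list set" where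
  "all_paths P P' = (\<Union>(x, y)\<in>edge_set P'. paths_between P x y)"

definition is_flow :: "('a::finite \<Rightarrow> 'a \<Rightarrow> real) \<Rightarrow> ('a \<Rightarrow> 'a \<Rightarrow> real) \<Rightarrow> ('a \<Rightarrow> real)
    \<Rightarrow> ('a list \<Rightarrow> real) \<Rightarrow> bool" where
  "is_flow P P' \<pi>' f \<longleftrightarrow>
     (\<forall>\<gamma>\<in>all_paths P P'. 0 \<le> f \<gamma> \<and> f \<gamma> \<le> 1) \<and>
     (\<forall>(x, y)\<in>edge_set P'. (\<Sum>\<gamma>\<in>paths_between P x y. f \<gamma>) = \<pi>' x * P' x y)"

definition flow_congestion_edge :: "('a::finite \<Rightarrow> 'a \<Rightarrow> real) \<Rightarrow> ('a \<Rightarrow> real) \<Rightarrow> ('a \<Rightarrow> 'a \<Rightarrow> real)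
    \<Rightarrow> ('a list \<Rightarrow> real) \<Rightarrow> 'a \<Rightarrow> 'a \<Rightarrow> real" where
  "flow_congestion_edge P \<pi> P' f z w =
     (1 / (\<pi> z * P z w)) *
     (\<Sum>\<gamma>\<in>{\<gamma>\<in>all_paths P P'. edge_mult (z, w) \<gamma> > 0}.
        real (edge_mult (z, w) \<gamma>) * real (path_len \<gamma>) * f \<gamma>)"

definition flow_congestion :: "('a::finite \<Rightarrow> 'a \<Rightarrow> real) \<Rightarrow> ('a \<Rightarrow> real) \<Rightarrow> ('a \<Rightarrow> 'a \<Rightarrow> real)
    \<Rightarrow> ('a list \<Rightarrow> real) \<Rightarrow> real" where
  "flow_congestion P \<pi> P' f =
     Max ((\<lambda>(z, w). flow_congestion_edge P \<pi> P' f z w) ` edge_set P)"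

end

theory Submission
  imports Defs
begin


lemma sum_delta_l[simp]: "(\<Sum>z\<in>UNIV. (if (x::'a::finite) = z then 1 else 0) * (f z::real)) = f x"
proof -
  have "(\<Sum>z\<in>UNIV. (if x = z then 1 else 0) * (f z::real)) = (\<Sum>z\<in>UNIV. if z = x then f z else 0)"
    by (rule sum.cong) auto
  then show ?thesis by simp
qed

lemma sum_delta_r[simp]: "(\<Sum>z\<in>UNIV. (f z::real) * (if z = (y::'a::finite) then 1 else 0)) = f y"
proof -
  have "(\<Sum>z\<in>UNIV. (f z::real) * (if z = y then 1 else 0)) = (\<Sum>z\<in>UNIV. if z = y then f z else 0)"
    by (rule sum.cong) auto
  then show ?thesis by simp
qed

lemma mpow_nonneg: "stochastic P \<Longrightarrow> 0 \<le> mpow P n x y"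
  by (induction n arbitrary: y) (auto simp: stochastic_def intro!: sum_nonneg)

lemma mpow_one: "mpow P (Suc 0) x y = P x y"
  by simp

lemma mpow_add: "mpow P (a + b) x y = (\<Sum>z\<in>UNIV. mpow P a x z * mpow P b z y)"
proof (induction b arbitrary: y)
  case 0
  then show ?case by simp
next
  case (Suc b)
  have "mpow P (a + Suc b) x y = (\<Sum>w\<in>UNIV. (\<Sum>z\<in>UNIV. mpow P a x z * mpow P b z w) * P w y)"
    by (simp add: Suc)
  also have "\<dots> = (\<Sum>w\<in>UNIV. \<Sum>z\<in>UNIV. mpow P a x z * (mpow P b z w * P w y))"
    by (simp add: sum_distrib_right mult.assoc)
  also have "\<dots> = (\<Sum>z\<in>UNIV. \<Sum>w\<in>UNIV. mpow P a x z * (mpow P b z w * P w y))"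
    by (rule sum.swap)
  also have "\<dots> = (\<Sum>z\<in>UNIV. mpow P a x z * mpow P (Suc b) z y)"
    by (simp add: sum_distrib_left)
  finally show ?case .
qed

lemma mpow_Suc_left: "mpow P (Suc n) x y = (\<Sum>z\<in>UNIV. P x z * mpow P n z y)"
  using mpow_add[of P "Suc 0" n x y] by simp

lemma mpow_rowsum: "stochastic P \<Longrightarrow> (\<Sum>y\<in>UNIV. mpow P n x y) = 1"
proof (induction n)
  case 0
  then show ?case by simp
next
  case (Suc n)
  have "(\<Sum>y\<in>UNIV. mpow P (Suc n) x y) = (\<Sum>y\<in>UNIV. \<Sum>z\<in>UNIV. mpow P n x z * P z y)" by simp
  also have "\<dots> = (\<Sum>z\<in>UNIV. \<Sum>y\<in>UNIV. mpow P n x z * P z y)" by (rule sum.swap)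
  also have "\<dots> = (\<Sum>z\<in>UNIV. mpow P n x z)"
    using Suc.prems by (simp add: sum_distrib_left[symmetric] stochastic_def)
  finally show ?case using Suc by simp
qed

lemma stationary_mpow: "stationary P \<pi> \<Longrightarrow> (\<Sum>x\<in>UNIV. \<pi> x * mpow P n x y) = \<pi> y"
proof (induction n arbitrary: y)
  case 0
  then show ?case by simp
next
  case (Suc n)
  have "(\<Sum>x\<in>UNIV. \<pi> x * mpow P (Suc n) x y) = (\<Sum>x\<in>UNIV. \<Sum>z\<in>UNIV. \<pi> x * mpow P n x z * P z y)"
    by (simp add: sum_distrib_left mult.assoc)
  also have "\<dots> = (\<Sum>z\<in>UNIV. \<Sum>x\<in>UNIV. \<pi> x * mpow P n x z * P z y)" by (rule sum.swap)
  also have "\<dots> = (\<Sum>z\<in>UNIV. \<pi> z * P z y)"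
    using Suc by (simp add: sum_distrib_right[symmetric])
  finally show ?case using Suc.prems by (simp add: stationary_def)
qed

lemma mpow_ge: assumes "stochastic P"
  shows "mpow P a x z * mpow P b z y \<le> mpow P (a + b) x y"
  unfolding mpow_add
  by (rule member_le_sum) (auto intro!: mult_nonneg_nonneg mpow_nonneg assms)

lemma pi_pos: assumes "stochastic P" "irreducible_chain P" "stationary P \<pi>"
  shows "\<pi> y > 0"
proof -
  have nn: "\<And>x. 0 \<le> \<pi> x" using assms(3) by (simp add: stationary_def)
  have "\<exists>x0. \<pi> x0 > 0"
  proof (rule ccontr)
    assume "\<not> ?thesis"
    then have "\<And>x. \<pi> x = 0" using nn by (meson not_less order_antisym)
    then show False using assms(3) by (simp add: stationary_def)
  qed
  then obtain x0 where x0: "\<pi> x0 > 0" by blast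
  obtain t where t: "mpow P t x0 y > 0" using assms(2) by (auto simp: irreducible_chain_def)
  have "\<pi> x0 * mpow P t x0 y \<le> (\<Sum>x\<in>UNIV. \<pi> x * mpow P t x y)"
    by (rule member_le_sum) (auto intro!: mult_nonneg_nonneg mpow_nonneg assms nn)
  then have "\<pi> x0 * mpow P t x0 y \<le> \<pi> y" using stationary_mpow[OF assms(3)] by simp
  moreover have "\<pi> x0 * mpow P t x0 y > 0" using x0 t by simp
  ultimately show ?thesis by linarith
qed

definition osc :: "('a::finite \<Rightarrow> real) \<Rightarrow> real" where
  "osc g = Max (range g) - Min (range g)"

lemma le_Max_range: "(g::'a::finite \<Rightarrow> real) x \<le> Max (range g)"
  by (rule Max_ge) auto

lemma Min_range_le: "Min (range (g::'a::finite \<Rightarrow> real)) \<le> g x"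
  by (rule Min_le) auto

lemma osc_nonneg: "0 \<le> osc (g::'a::finite \<Rightarrow> real)"
  using le_Max_range[of g undefined] Min_range_le[of g undefined] by (simp add: osc_def)

lemma osc_diff: "\<bar>g x - g y\<bar> \<le> osc (g::'a::finite \<Rightarrow> real)"
proof -
  have "g x \<le> Max (range g)" "g y \<le> Max (range g)" "Min (range g) \<le> g x" "Min (range g) \<le> g y"
    by (rule le_Max_range Min_range_le)+
  then show ?thesis unfolding osc_def abs_le_iff by linarith
qed

lemma osc_le: assumes "\<And>x y. (g::'a::finite \<Rightarrow> real) x - g y \<le> c" shows "osc g \<le> c"
proof -
  have "Max (range g) \<in> range g" by (rule Max_in) auto
  then obtain a where a: "Max (range g) = g a" by blast
  have "Min (range g) \<in> range g" by (rule Min_in) auto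
  then obtain b where b: "Min (range g) = g b" by blast
  show ?thesis using assms[of a b] a b by (simp add: osc_def)
qed

lemma osc_bounds: assumes "\<And>x. lo \<le> (g::'a::finite \<Rightarrow> real) x" "\<And>x. g x \<le> hi"
  shows "osc g \<le> hi - lo"
  by (rule osc_le) (smt (verit) assms)

lemma osc_contract:
  fixes Q :: "'a::finite \<Rightarrow> 'a \<Rightarrow> real"
  assumes rows: "\<And>x x'. (\<Sum>y\<in>UNIV. Q x y) = (\<Sum>y\<in>UNIV. Q x' y)"
    and d: "\<And>x x'. (\<Sum>y\<in>UNIV. \<bar>Q x y - Q x' y\<bar>) \<le> 2 * \<theta>"
  shows "osc (\<lambda>x. \<Sum>y\<in>UNIV. Q x y * g y) \<le> \<theta> * osc g"
proof (rule osc_le)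
  fix x x'
  define c where "c = (Max (range g) + Min (range g)) / 2"
  have gc: "\<bar>g y - c\<bar> \<le> osc g / 2" for y
  proof -
    have "g y \<le> Max (range g)" "Min (range g) \<le> g y"
      by (rule le_Max_range Min_range_le)+
    then have A: "g y - c \<le> osc g / 2" unfolding c_def osc_def by (simp add: field_simps)
    moreover have B: "c - g y \<le> osc g / 2" using \<open>Min (range g) \<le> g y\<close> \<open>g y \<le> Max (range g)\<close> unfolding c_def osc_def by (simp add: field_simps)
    show ?thesis by (metis A B abs_leI minus_diff_eq)
  qed
  have "(\<Sum>y\<in>UNIV. Q x y * g y) - (\<Sum>y\<in>UNIV. Q x' y * g y)
      = (\<Sum>y\<in>UNIV. (Q x y - Q x' y) * (g y - c)) + c * ((\<Sum>y\<in>UNIV. Q x y) - (\<Sum>y\<in>UNIV. Q x' y))"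
    by (simp add: left_diff_distrib right_diff_distrib sum_subtractf sum_distrib_left mult.commute)
  also have "\<dots> = (\<Sum>y\<in>UNIV. (Q x y - Q x' y) * (g y - c))" using rows[of x x'] by simp
  also have "\<dots> \<le> (\<Sum>y\<in>UNIV. \<bar>Q x y - Q x' y\<bar> * (osc g / 2))"
  proof (rule sum_mono)
    fix y
    have "(Q x y - Q x' y) * (g y - c) \<le> \<bar>(Q x y - Q x' y) * (g y - c)\<bar>" by simp
    also have "\<dots> = \<bar>Q x y - Q x' y\<bar> * \<bar>g y - c\<bar>" by (simp add: abs_mult)
    also have "\<dots> \<le> \<bar>Q x y - Q x' y\<bar> * (osc g / 2)" using gc[of y] by (intro mult_left_mono) auto
    finally show "(Q x y - Q x' y) * (g y - c) \<le> \<bar>Q x y - Q x' y\<bar> * (osc g / 2)" .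
  qed
  also have "\<dots> = (\<Sum>y\<in>UNIV. \<bar>Q x y - Q x' y\<bar>) * (osc g / 2)" by (simp add: sum_distrib_right)
  also have "\<dots> \<le> 2 * \<theta> * (osc g / 2)"
    using mult_right_mono[OF d[of x x'] osc_nonneg[of g]] by simp
  finally show "(\<Sum>y\<in>UNIV. Q x y * g y) - (\<Sum>y\<in>UNIV. Q x' y * g y) \<le> \<theta> * osc g" by simp
qed

lemma mpow_comp: "(\<Sum>y\<in>UNIV. mpow P (a + b) x y * g y)
   = (\<Sum>z\<in>UNIV. mpow P a x z * (\<Sum>y\<in>UNIV. mpow P b z y * g y))"
proof -
  have "(\<Sum>y\<in>UNIV. mpow P (a + b) x y * g y) = (\<Sum>y\<in>UNIV. \<Sum>z\<in>UNIV. mpow P a x z * mpow P b z y * g y)"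
    by (simp add: mpow_add sum_distrib_right)
  also have "\<dots> = (\<Sum>z\<in>UNIV. \<Sum>y\<in>UNIV. mpow P a x z * mpow P b z y * g y)" by (rule sum.swap)
  also have "\<dots> = (\<Sum>z\<in>UNIV. mpow P a x z * (\<Sum>y\<in>UNIV. mpow P b z y * g y))"
    by (simp add: sum_distrib_left mult.assoc)
  finally show ?thesis .
qed

lemma osc_stoch_mono:
  assumes "\<And>x y. 0 \<le> Q x y" "\<And>x. (\<Sum>y\<in>UNIV. Q x y) = 1"
  shows "osc (\<lambda>x. \<Sum>y\<in>UNIV. (Q::'a::finite\<Rightarrow>'a\<Rightarrow>real) x y * g y) \<le> osc g"
proof -
  have "osc (\<lambda>x. \<Sum>y\<in>UNIV. Q x y * g y) \<le> 1 * osc g"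
  proof (rule osc_contract)
    fix x x'
    have "(\<Sum>y\<in>UNIV. \<bar>Q x y - Q x' y\<bar>) \<le> (\<Sum>y\<in>UNIV. Q x y + Q x' y)"
      by (rule sum_mono) (use assms(1) in \<open>simp add: abs_le_iff\<close>)
    also have "\<dots> = 2" using assms(2) by (simp add: sum.distrib)
    finally show "(\<Sum>y\<in>UNIV. \<bar>Q x y - Q x' y\<bar>) \<le> 2 * 1" by simp
  qed (simp add: assms)
  then show ?thesis by simp
qed

lemma osc_mpow_mono: assumes "stochastic P"
  shows "osc (\<lambda>x. \<Sum>y\<in>UNIV. mpow P n x y * g y) \<le> osc g"
  by (rule osc_stoch_mono) (auto simp: mpow_nonneg mpow_rowsum assms)



lemma addclosed_mult: assumes add: "\<And>a b. a \<in> S \<Longrightarrow> b \<in> S \<Longrightarrow> a + b \<in> S"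
  and "a \<in> S" and "k \<ge> 1" shows "k * (a::nat) \<in> S"
  using assms(3)
proof (induction k)
  case 0 then show ?case by simp
next
  case (Suc k)
  show ?case
  proof (cases "k = 0")
    case True then show ?thesis using assms(2) by simp
  next
    case False then have "k * a \<in> S" using Suc by simp
    then show ?thesis using add[OF assms(2)] by simp
  qed
qed

lemma semigroup_gcd_large:
  fixes S :: "nat set"
  assumes add: "\<And>a b. a \<in> S \<Longrightarrow> b \<in> S \<Longrightarrow> a + b \<in> S"
    and pos: "0 \<notin> S" and g: "Gcd S = 1"
  shows "\<exists>N. \<forall>n\<ge>N. n \<in> S"
proof -
  have "S \<noteq> {}" using g by auto
  then obtain s0 where s0: "s0 \<in> S" by blast
  define D where "D = {d. d > 0 \<and> (\<exists>a\<in>S. a + d \<in> S)}"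
  have "s0 > 0" using s0 pos by (cases s0) auto
  then have "s0 \<in> D" unfolding D_def using add[OF s0 s0] s0 by blast
  define g0 where "g0 = (LEAST d. d \<in> D)"
  have g0D: "g0 \<in> D" unfolding g0_def by (rule LeastI) fact
  have g0min: "\<And>d. d \<in> D \<Longrightarrow> g0 \<le> d" unfolding g0_def by (rule Least_le)
  obtain a where a: "a \<in> S" "a + g0 \<in> S" "g0 > 0" using g0D unfolding D_def by blast
  have "g0 = 1"
  proof (rule ccontr)
    assume ne: "g0 \<noteq> 1"
    have "\<not> (\<forall>s\<in>S. g0 dvd s)"
    proof
      assume "\<forall>s\<in>S. g0 dvd s"
      then have "g0 dvd Gcd S" by (simp add: Gcd_greatest)
      then show False using g ne by simp
    qed
    then obtain s where s: "s \<in> S" "\<not> g0 dvd s" by blast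
    define q where "q = s div g0"
    define r where "r = s mod g0"
    have sqr: "s = q * g0 + r" unfolding q_def r_def by simp
    have r0: "r > 0" using s(2) unfolding r_def by (simp add: dvd_eq_mod_eq_0)
    have rg: "r < g0" unfolding r_def using a(3) by simp
    have A: "(q + 1) * (a + g0) \<in> S" by (rule addclosed_mult[OF add a(2)]) (simp_all add: le_add2)
    have "(q + 1) * a \<in> S" by (rule addclosed_mult[OF add a(1)]) simp_all
    then have B: "s + (q + 1) * a \<in> S" using add[OF s(1)] by simp
    have "(s + (q + 1) * a) + (g0 - r) = (q + 1) * (a + g0)"
      using sqr rg by (simp add: algebra_simps)
    then have "g0 - r \<in> D" using A B rg unfolding D_def by (auto intro!: bexI[of _ "s + (q + 1) * a"])
    then have "g0 \<le> g0 - r" by (rule g0min)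
    then show False using r0 rg by simp
  qed
  then have a1: "a + 1 \<in> S" using a by simp
  have apos: "a > 0" using a(1) pos by (cases a) auto
  have "\<forall>n\<ge>a * a. n \<in> S"
  proof (intro allI impI)
    fix n assume n: "n \<ge> a * a"
    define q where "q = n div a"
    define r where "r = n mod a"
    have nqr: "n = q * a + r" unfolding q_def r_def by simp
    have ra: "r < a" unfolding r_def using apos by simp
    have qa: "q \<ge> a"
    proof (rule ccontr)
      assume "\<not> q \<ge> a"
      then have "q + 1 \<le> a" by simp
      then have "(q + 1) * a \<le> a * a" by (rule mult_le_mono1)
      then show False using n nqr ra by (simp add: algebra_simps)
    qed
    have eq: "n = (q - r) * a + r * (a + 1)"
      using nqr qa ra by (simp add: algebra_simps diff_mult_distrib)
    have t1: "(q - r) * a \<in> S" by (rule addclosed_mult[OF add a(1)]) (use qa ra in simp_all)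
    show "n \<in> S"
    proof (cases "r = 0")
      case True then show ?thesis using t1 eq by simp
    next
      case False
      have "r * (a + 1) \<in> S" by (rule addclosed_mult[OF add a1]) (use False in auto)
      then show ?thesis using add[OF t1] eq by simp
    qed
  qed
  then show ?thesis by blast
qed

lemma ergodic_stochastic: "ergodic P \<Longrightarrow> stochastic P" by (simp add: ergodic_def)

lemma ergodic_primitive:
  fixes P :: "'a::finite \<Rightarrow> 'a \<Rightarrow> real"
  assumes "ergodic P"
  shows "\<exists>r\<ge>1. \<forall>x y. mpow P r x y > 0"
proof -
  have st: "stochastic P" using assms by (simp add: ergodic_def)
  have "\<exists>N. \<forall>t\<ge>N. mpow P t x x > 0" for x
  proof -
    define S where "S = {t::nat. t \<ge> 1 \<and> mpow P t x x > 0}"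
    have "\<exists>N. \<forall>n\<ge>N. n \<in> S"
    proof (rule semigroup_gcd_large)
      fix a b assume "a \<in> S" "b \<in> S"
      then have "mpow P a x x * mpow P b x x > 0" "a + b \<ge> 1" unfolding S_def by auto
      then show "a + b \<in> S" using mpow_ge[OF st, of a x x b x] unfolding S_def by auto
    next
      show "0 \<notin> S" unfolding S_def by simp
    next
      show "Gcd S = 1" using assms unfolding S_def ergodic_def aperiodic_chain_def by blast
    qed
    then show ?thesis unfolding S_def by blast
  qed
  then obtain N where N: "\<And>x t. t \<ge> N x \<Longrightarrow> mpow P t x x > 0" by metis
  have "\<exists>t. mpow P t x y > 0" for x y using assms unfolding ergodic_def irreducible_chain_def by blast
  then obtain T where T: "\<And>x y. mpow P (T x y) x y > 0" by metis
  define M1 where "M1 = Max (range N)"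
  define M2 where "M2 = Max (range (\<lambda>p. T (fst p) (snd p)))"
  define r where "r = M1 + M2 + 1"
  have "mpow P r x y > 0" for x y
  proof -
    have "N x \<le> M1" unfolding M1_def by (rule Max_ge) auto
    moreover have "T x y \<le> M2" unfolding M2_def by (rule Max_ge) (auto intro: image_eqI[of _ _ "(x,y)"])
    ultimately have le: "N x \<le> r - T x y" "r = (r - T x y) + T x y" unfolding r_def by auto
    have "mpow P (r - T x y) x x * mpow P (T x y) x y \<le> mpow P r x y"
      using mpow_ge[OF st, of "r - T x y" x x "T x y" y] le(2) by simp
    moreover have "mpow P (r - T x y) x x * mpow P (T x y) x y > 0" using N[OF le(1)] T[of x y] by simp
    ultimately show ?thesis by linarith
  qed
  then show ?thesis unfolding r_def by (intro exI[of _ "M1 + M2 + 1"]) auto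
qed

lemma doeblin:
  fixes P :: "'a::finite \<Rightarrow> 'a \<Rightarrow> real"
  assumes "ergodic P"
  shows "\<exists>r\<ge>1. \<exists>\<delta>>0. \<delta> \<le> 1 \<and> (\<forall>g. osc (\<lambda>x. \<Sum>y\<in>UNIV. mpow P r x y * g y) \<le> (1 - \<delta>) * osc g)"
proof -
  have st: "stochastic P" using assms by (simp add: ergodic_def)
  obtain r where r: "r \<ge> 1" "\<And>x y. mpow P r x y > 0" using ergodic_primitive[OF assms] by blast
  define \<delta> where "\<delta> = Min (range (\<lambda>p. mpow P r (fst p) (snd p)))"
  have dle: "\<delta> \<le> mpow P r x y" for x y unfolding \<delta>_def by (rule Min_le) (auto intro: image_eqI[of _ _ "(x,y)"])
  have "\<delta> \<in> range (\<lambda>p. mpow P r (fst p) (snd p))" unfolding \<delta>_def by (rule Min_in) auto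
  then have dpos: "\<delta> > 0" using r(2) by auto
  have "mpow P r x y \<le> 1" for x y
  proof -
    have "mpow P r x y \<le> (\<Sum>y\<in>UNIV. mpow P r x y)"
      by (rule member_le_sum) (auto simp: mpow_nonneg st)
    then show ?thesis using mpow_rowsum[OF st] by simp
  qed
  then have d1: "\<delta> \<le> 1" using dle[of undefined undefined] by (meson order_trans)
  have "osc (\<lambda>x. \<Sum>y\<in>UNIV. mpow P r x y * g y) \<le> (1 - \<delta>) * osc g" for g
  proof (rule osc_contract)
    fix x x'
    show "(\<Sum>y\<in>UNIV. mpow P r x y) = (\<Sum>y\<in>UNIV. mpow P r x' y)" by (simp add: mpow_rowsum st)
  next
    fix x x'
    have "(\<Sum>y\<in>UNIV. \<bar>mpow P r x y - mpow P r x' y\<bar>)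
        = (\<Sum>y\<in>UNIV. mpow P r x y + mpow P r x' y - 2 * min (mpow P r x y) (mpow P r x' y))"
      by (rule sum.cong) (auto simp: min_def)
    also have "\<dots> = 2 - 2 * (\<Sum>y\<in>UNIV. min (mpow P r x y) (mpow P r x' y))"
      by (simp add: sum_subtractf sum.distrib mpow_rowsum st sum_distrib_left)
    also have "\<dots> \<le> 2 - 2 * \<delta>"
    proof -
      have "min (mpow P r x x) (mpow P r x' x) \<le> (\<Sum>y\<in>UNIV. min (mpow P r x y) (mpow P r x' y))"
        by (rule member_le_sum) (auto simp: mpow_nonneg st)
      moreover have "\<delta> \<le> min (mpow P r x x) (mpow P r x' x)" using dle by simp
      ultimately show ?thesis by linarith
    qed
    finally show "(\<Sum>y\<in>UNIV. \<bar>mpow P r x y - mpow P r x' y\<bar>) \<le> 2 * (1 - \<delta>)" by simp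
  qed
  then show ?thesis using r(1) dpos d1 by blast
qed

lemma doeblin_iter:
  fixes P :: "'a::finite \<Rightarrow> 'a \<Rightarrow> real"
  assumes st: "stochastic P"
    and c: "\<And>g. osc (\<lambda>x. \<Sum>y\<in>UNIV. mpow P r x y * g y) \<le> \<theta> * osc g" and th: "0 \<le> \<theta>"
  shows "osc (\<lambda>x. \<Sum>y\<in>UNIV. mpow P (k * r + j) x y * g y) \<le> \<theta> ^ k * osc g"
proof (induction k)
  case 0
  then show ?case using osc_mpow_mono[OF st] by simp
next
  case (Suc k)
  have eq: "(\<lambda>x. \<Sum>y\<in>UNIV. mpow P (Suc k * r + j) x y * g y)
     = (\<lambda>x. \<Sum>z\<in>UNIV. mpow P r x z * (\<Sum>y\<in>UNIV. mpow P (k * r + j) z y * g y))"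
    using mpow_comp[of P r "k * r + j"] by (simp add: add.assoc)
  have "osc (\<lambda>x. \<Sum>y\<in>UNIV. mpow P (Suc k * r + j) x y * g y)
      \<le> \<theta> * osc (\<lambda>z. \<Sum>y\<in>UNIV. mpow P (k * r + j) z y * g y)"
    unfolding eq by (rule c)
  also have "\<dots> \<le> \<theta> * (\<theta> ^ k * osc g)" using Suc th by (simp add: mult_left_mono)
  finally show ?case by simp
qed

lemma entry_close:
  fixes P :: "'a::finite \<Rightarrow> 'a \<Rightarrow> real"
  assumes "stationary P \<pi>"
  shows "\<bar>mpow P t x y - \<pi> y\<bar> \<le> osc (\<lambda>x. \<Sum>w\<in>UNIV. mpow P t x w * (if w = y then 1 else 0))"
proof -
  have nn: "\<And>z. 0 \<le> \<pi> z" and s1: "(\<Sum>z\<in>UNIV. \<pi> z) = 1" using assms by (auto simp: stationary_def)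
  define h where "h = (\<lambda>x. \<Sum>w\<in>UNIV. mpow P t x w * (if w = y then 1 else 0))"
  have h: "h x = mpow P t x y" for x unfolding h_def by simp
  have "mpow P t x y - \<pi> y = (\<Sum>z\<in>UNIV. \<pi> z * (h x - h z))"
    using stationary_mpow[OF assms, of t y] s1
    by (simp add: h right_diff_distrib sum_subtractf sum_distrib_right[symmetric])
  also have "\<bar>\<dots>\<bar> \<le> (\<Sum>z\<in>UNIV. \<pi> z * osc h)"
    by (rule order_trans[OF sum_abs sum_mono]) (simp add: abs_mult nn osc_diff mult_left_mono)
  also have "\<dots> = osc h" using s1 by (simp add: sum_distrib_right[symmetric])
  finally show ?thesis unfolding h_def .
qed

lemma osc_indicator: "osc (\<lambda>w::'a::finite. if w = y then 1 else (0::real)) \<le> 1"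
  using osc_bounds[of 0 "\<lambda>w::'a. if w = y then 1 else (0::real)" 1] by simp

lemma ergodic_converges:
  fixes P :: "'a::finite \<Rightarrow> 'a \<Rightarrow> real"
  assumes "ergodic P" "stationary P \<pi>" "e > 0"
  shows "\<exists>t>0. \<forall>t'\<ge>t. \<forall>x. tvd (mpow P t' x) \<pi> \<le> e"
proof -
  have st: "stochastic P" using assms by (simp add: ergodic_def)
  obtain r \<delta> where r: "r \<ge> 1" "\<delta> > 0" "\<delta> \<le> 1"
    and c: "\<And>g. osc (\<lambda>x. \<Sum>y\<in>UNIV. mpow P r x y * g y) \<le> (1 - \<delta>) * osc g"
    using doeblin[OF assms(1)] by blast
  define n where "n = real (card (UNIV::'a set))"
  have npos: "n > 0" unfolding n_def by simp
  obtain k where k: "(1 - \<delta>) ^ k < 2 * e / n"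
    using real_arch_pow_inv[of "2 * e / n" "1 - \<delta>"] r assms(3) npos by auto
  have bound: "tvd (mpow P t' x) \<pi> \<le> e" if "t' \<ge> k * r" for t' x
  proof -
    define j where "j = t' mod r"
    define m where "m = t' div r"
    have tmj: "t' = m * r + j" unfolding m_def j_def by simp
    have mk: "m \<ge> k" unfolding m_def using that r(1)
      by (metis div_le_mono div_mult_self_is_m not_one_le_zero zero_less_iff_neq_zero)
    have ent: "\<bar>mpow P t' x y - \<pi> y\<bar> \<le> (1 - \<delta>) ^ k" for y
    proof -
      have "\<bar>mpow P t' x y - \<pi> y\<bar> \<le> osc (\<lambda>x. \<Sum>w\<in>UNIV. mpow P (m * r + j) x w * (if w = y then 1 else 0))"
        using entry_close[OF assms(2), of t' x y] tmj by simp
      also have "\<dots> \<le> (1 - \<delta>) ^ m * osc (\<lambda>w. if w = y then 1 else (0::real))"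
        by (rule doeblin_iter[OF st c]) (use r in simp)
      also have "\<dots> \<le> (1 - \<delta>) ^ m * 1"
        by (rule mult_left_mono[OF osc_indicator]) (use r in simp)
      also have "\<dots> \<le> (1 - \<delta>) ^ k" using mk r by (simp add: power_decreasing)
      finally show ?thesis .
    qed
    have "tvd (mpow P t' x) \<pi> \<le> (1/2) * (\<Sum>y\<in>(UNIV::'a set). (1 - \<delta>) ^ k)"
    proof -
      have "(\<Sum>y\<in>UNIV. \<bar>mpow P t' x y - \<pi> y\<bar>) \<le> (\<Sum>y\<in>(UNIV::'a set). (1 - \<delta>) ^ k)"
        by (rule sum_mono) (rule ent)
      then show ?thesis unfolding tvd_def by simp
    qed
    also have "\<dots> = (1/2) * n * (1 - \<delta>) ^ k" unfolding n_def by simp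
    also have "\<dots> \<le> (1/2) * n * (2 * e / n)" using k npos by (intro mult_left_mono) auto
    also have "\<dots> = e" using npos by simp
    finally show ?thesis .
  qed
  show ?thesis by (rule exI[of _ "k * r + 1"]) (auto intro: bound)
qed

lemma mix_time_prop:
  fixes P :: "'a::finite \<Rightarrow> 'a \<Rightarrow> real"
  assumes "ergodic P" "stationary P \<pi>" "e > 0"
  shows "mix_time P \<pi> e \<ge> 1" "\<And>x t'. t' \<ge> mix_time P \<pi> e \<Longrightarrow> tvd (mpow P t' x) \<pi> \<le> e"
proof -
  obtain t where t: "t > 0" "\<And>t' x. t' \<ge> t \<Longrightarrow> tvd (mpow P t' x) \<pi> \<le> e"
    using ergodic_converges[OF assms] by blast
  have L: "mix_time_from P \<pi> x e > 0 \<and> (\<forall>t'\<ge>mix_time_from P \<pi> x e. tvd (mpow P t' x) \<pi> \<le> e)" for x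
    unfolding mix_time_from_def by (rule LeastI[of _ t]) (use t in auto)
  have le: "mix_time_from P \<pi> x e \<le> mix_time P \<pi> e" for x
    unfolding mix_time_def by (rule Max_ge) auto
  show "mix_time P \<pi> e \<ge> 1" using L[of undefined] le[of undefined] by linarith
  fix x t' assume "t' \<ge> mix_time P \<pi> e"
  then show "tvd (mpow P t' x) \<pi> \<le> e" using L[of x] le[of x] by auto
qed



definition ip :: "('a::finite \<Rightarrow> real) \<Rightarrow> ('a \<Rightarrow> real) \<Rightarrow> ('a \<Rightarrow> real) \<Rightarrow> real" where
  "ip \<pi> f g = (\<Sum>x\<in>UNIV. \<pi> x * f x * g x)"

definition Kop :: "('a::finite \<Rightarrow> 'a \<Rightarrow> real) \<Rightarrow> ('a \<Rightarrow> real) \<Rightarrow> 'a \<Rightarrow> real" where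
  "Kop P g = (\<lambda>x. \<Sum>y\<in>UNIV. P x y * g y)"

definition dirichlet :: "('a::finite \<Rightarrow> 'a \<Rightarrow> real) \<Rightarrow> ('a \<Rightarrow> real) \<Rightarrow> ('a \<Rightarrow> real) \<Rightarrow> real" where
  "dirichlet P \<pi> \<phi> = (1/2) * (\<Sum>x\<in>UNIV. \<Sum>y\<in>UNIV. \<pi> x * P x y * (\<phi> x - \<phi> y)\<^sup>2)"

lemma double_sum_split:
  "(\<Sum>x\<in>A. \<Sum>y\<in>B. f x y - 2 * g x y + h x y) =
   (\<Sum>x\<in>A. \<Sum>y\<in>B. f x y) - 2 * (\<Sum>x\<in>A. \<Sum>y\<in>B. g x y) + (\<Sum>x\<in>A. \<Sum>y\<in>B. (h x y::real))"
  by (simp add: sum.distrib sum_subtractf sum_distrib_left)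

lemma dirichlet_eq:
  assumes "stochastic P" "stationary P \<pi>"
  shows "dirichlet P \<pi> \<phi> = ip \<pi> \<phi> \<phi> - ip \<pi> \<phi> (Kop P \<phi>)"
proof -
  have r1: "\<And>x. (\<Sum>y\<in>UNIV. P x y) = 1" using assms(1) by (simp add: stochastic_def)
  have st: "\<And>y. (\<Sum>x\<in>UNIV. \<pi> x * P x y) = \<pi> y" using assms(2) by (simp add: stationary_def)
  have "(\<Sum>x\<in>UNIV. \<Sum>y\<in>UNIV. \<pi> x * P x y * (\<phi> x - \<phi> y)\<^sup>2)
     = (\<Sum>x\<in>UNIV. \<Sum>y\<in>UNIV. \<pi> x * P x y * (\<phi> x)\<^sup>2 - 2 * (\<pi> x * P x y * \<phi> x * \<phi> y) + \<pi> x * P x y * (\<phi> y)\<^sup>2)"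
    by (intro sum.cong refl) (simp add: power2_diff algebra_simps)
  also have "\<dots> = (\<Sum>x\<in>UNIV. \<Sum>y\<in>UNIV. \<pi> x * P x y * (\<phi> x)\<^sup>2)
       - 2 * (\<Sum>x\<in>UNIV. \<Sum>y\<in>UNIV. \<pi> x * P x y * \<phi> x * \<phi> y)
       + (\<Sum>x\<in>UNIV. \<Sum>y\<in>UNIV. \<pi> x * P x y * (\<phi> y)\<^sup>2)"
    by (rule double_sum_split)
  also have "(\<Sum>x\<in>UNIV. \<Sum>y\<in>UNIV. \<pi> x * P x y * (\<phi> x)\<^sup>2) = ip \<pi> \<phi> \<phi>"
  proof -
    have "(\<Sum>y\<in>UNIV. \<pi> x * P x y * (\<phi> x)\<^sup>2) = (\<pi> x * (\<phi> x)\<^sup>2) * (\<Sum>y\<in>UNIV. P x y)" for x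
      by (subst sum_distrib_left) (simp add: mult_ac)
    then show ?thesis unfolding ip_def by (simp add: r1 power2_eq_square mult_ac)
  qed
  also have "(\<Sum>x\<in>UNIV. \<Sum>y\<in>UNIV. \<pi> x * P x y * \<phi> x * \<phi> y) = ip \<pi> \<phi> (Kop P \<phi>)"
    unfolding ip_def Kop_def by (simp add: sum_distrib_left mult_ac)
  also have "(\<Sum>x\<in>UNIV. \<Sum>y\<in>UNIV. \<pi> x * P x y * (\<phi> y)\<^sup>2) = ip \<pi> \<phi> \<phi>"
  proof -
    have "(\<Sum>x\<in>UNIV. \<Sum>y\<in>UNIV. \<pi> x * P x y * (\<phi> y)\<^sup>2) = (\<Sum>y\<in>UNIV. \<Sum>x\<in>UNIV. \<pi> x * P x y * (\<phi> y)\<^sup>2)"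
      by (rule sum.swap)
    also have "\<dots> = (\<Sum>y\<in>UNIV. (\<Sum>x\<in>UNIV. \<pi> x * P x y) * (\<phi> y)\<^sup>2)"
      by (simp add: sum_distrib_right)
    also have "\<dots> = ip \<pi> \<phi> \<phi>" unfolding ip_def by (simp add: st power2_eq_square mult_ac)
    finally show ?thesis .
  qed
  finally show ?thesis unfolding dirichlet_def by simp
qed

lemma dirichlet_shift: "dirichlet P \<pi> (\<lambda>x. \<phi> x - c) = dirichlet P \<pi> \<phi>"
  unfolding dirichlet_def by simp

lemma Kop_mean:
  assumes "stationary P \<pi>"
  shows "(\<Sum>x\<in>UNIV. \<pi> x * Kop P g x) = (\<Sum>x\<in>UNIV. \<pi> x * g x)"
proof -
  have "(\<Sum>x\<in>UNIV. \<pi> x * Kop P g x) = (\<Sum>x\<in>UNIV. \<Sum>y\<in>UNIV. \<pi> x * P x y * g y)"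
    unfolding Kop_def by (simp add: sum_distrib_left mult_ac)
  also have "\<dots> = (\<Sum>y\<in>UNIV. \<Sum>x\<in>UNIV. \<pi> x * P x y * g y)" by (rule sum.swap)
  also have "\<dots> = (\<Sum>y\<in>UNIV. (\<Sum>x\<in>UNIV. \<pi> x * P x y) * g y)" by (simp add: sum_distrib_right)
  also have "\<dots> = (\<Sum>y\<in>UNIV. \<pi> y * g y)" using assms by (simp add: stationary_def)
  finally show ?thesis .
qed

lemma Kop_selfadj:
  assumes "reversible P \<pi>"
  shows "ip \<pi> f (Kop P g) = ip \<pi> (Kop P f) g"
proof -
  have "ip \<pi> f (Kop P g) = (\<Sum>x\<in>UNIV. \<Sum>y\<in>UNIV. (\<pi> x * P x y) * f x * g y)"
    unfolding ip_def Kop_def by (simp add: sum_distrib_left mult_ac)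
  also have "\<dots> = (\<Sum>x\<in>UNIV. \<Sum>y\<in>UNIV. (\<pi> y * P y x) * f x * g y)"
    using assms by (simp add: reversible_def)
  also have "\<dots> = (\<Sum>y\<in>UNIV. \<Sum>x\<in>UNIV. (\<pi> y * P y x) * f x * g y)" by (rule sum.swap)
  also have "\<dots> = ip \<pi> (Kop P f) g"
    unfolding ip_def Kop_def by (simp add: sum_distrib_left sum_distrib_right mult_ac)
  finally show ?thesis .
qed

lemma ip_cs:
  assumes "\<And>x. 0 \<le> \<pi> x"
  shows "(ip \<pi> f g)\<^sup>2 \<le> ip \<pi> f f * ip \<pi> g g"
proof -
  have "(\<Sum>x\<in>UNIV. (sqrt (\<pi> x) * f x) * (sqrt (\<pi> x) * g x))\<^sup>2
     \<le> (\<Sum>x\<in>UNIV. (sqrt (\<pi> x) * f x)\<^sup>2) * (\<Sum>x\<in>UNIV. (sqrt (\<pi> x) * g x)\<^sup>2)"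
    by (rule Cauchy_Schwarz_ineq_sum)
  moreover have "\<And>x. (sqrt (\<pi> x) * f x) * (sqrt (\<pi> x) * g x) = \<pi> x * f x * g x"
    using assms by (simp add: algebra_simps real_sqrt_mult_self)
  moreover have "\<And>x h. (sqrt (\<pi> x) * h x)\<^sup>2 = \<pi> x * h x * h x"
    using assms by (simp add: power_mult_distrib power2_eq_square)
  ultimately show ?thesis unfolding ip_def by simp
qed

lemma ip_sq_nonneg: "(\<And>x. 0 \<le> \<pi> x) \<Longrightarrow> 0 \<le> ip \<pi> f f"
  unfolding ip_def by (intro sum_nonneg) (metis mult.assoc mult_nonneg_nonneg zero_le_square)

lemma Kop_mpow: "Kop P (\<lambda>x. \<Sum>y\<in>UNIV. mpow P n x y * g y) = (\<lambda>x. \<Sum>y\<in>UNIV. mpow P (Suc n) x y * g y)"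
  unfolding Kop_def using mpow_comp[of P "Suc 0" n] by (simp add: fun_eq_iff)

lemma logconvex_seq:
  fixes b :: "nat \<Rightarrow> real"
  assumes nn: "\<And>n. 0 \<le> b n" and lc: "\<And>n. (b (Suc n))\<^sup>2 \<le> b n * b (Suc (Suc n))"
  shows "b 1 ^ n * b 0 \<le> b 0 ^ n * b n"
proof -
  have step: "b 1 * b k \<le> b 0 * b (Suc k)" for k
  proof (induction k)
    case 0 then show ?case by (simp add: mult.commute)
  next
    case (Suc k)
    show ?case
    proof (cases "b (Suc k) = 0")
      case True then show ?thesis using nn by simp
    next
      case False
      then have pos: "b (Suc k) > 0" using nn[of "Suc k"] by simp
      have "b 1 * (b (Suc k))\<^sup>2 \<le> b 1 * (b k * b (Suc (Suc k)))"
        using lc[of k] nn[of 1] by (simp add: mult_left_mono)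
      also have "\<dots> = (b 1 * b k) * b (Suc (Suc k))" by simp
      also have "\<dots> \<le> (b 0 * b (Suc k)) * b (Suc (Suc k))"
        using Suc nn by (simp add: mult_right_mono)
      finally have "(b 1 * b (Suc k)) * b (Suc k) \<le> (b 0 * b (Suc (Suc k))) * b (Suc k)"
        by (simp add: power2_eq_square mult_ac)
      then show ?thesis using pos by simp
    qed
  qed
  show ?thesis
  proof (induction n)
    case 0 then show ?case by simp
  next
    case (Suc n)
    have "b 1 ^ Suc n * b 0 = b 1 * (b 1 ^ n * b 0)" by simp
    also have "\<dots> \<le> b 1 * (b 0 ^ n * b n)" using Suc nn by (simp add: mult_left_mono)
    also have "\<dots> = b 0 ^ n * (b 1 * b n)" by simp
    also have "\<dots> \<le> b 0 ^ n * (b 0 * b (Suc n))" using step[of n] nn by (simp add: mult_left_mono)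
    also have "\<dots> = b 0 ^ Suc n * b (Suc n)" by simp
    finally show ?case .
  qed
qed

lemma meanzero_bound:
  fixes h :: "'a::finite \<Rightarrow> real"
  assumes pos: "\<And>x. 0 < \<pi> x" and m: "(\<Sum>x\<in>UNIV. \<pi> x * h x) = 0"
  shows "\<bar>h x\<bar> \<le> osc h"
proof -
  have "\<exists>y. h y \<le> 0"
  proof (rule ccontr)
    assume "\<not> ?thesis"
    then have "\<And>y. 0 < \<pi> y * h y" using pos by (simp add: not_le)
    then have "0 < (\<Sum>x\<in>UNIV. \<pi> x * h x)" by (intro sum_pos) auto
    then show False using m by simp
  qed
  then obtain y where y: "h y \<le> 0" by blast
  have "\<exists>z. h z \<ge> 0"
  proof (rule ccontr)
    assume "\<not> ?thesis"
    then have "\<And>y. \<pi> y * h y < 0" using pos by (simp add: not_le mult_pos_neg)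
    then have "0 < (\<Sum>x\<in>UNIV. - (\<pi> x * h x))" by (intro sum_pos) auto
    then show False using m by (simp add: sum_negf)
  qed
  then obtain z where z: "h z \<ge> 0" by blast
  have "\<bar>h x - h y\<bar> \<le> osc h" "\<bar>h x - h z\<bar> \<le> osc h" by (rule osc_diff)+
  then show ?thesis using y z by (simp add: abs_le_iff)
qed



lemma dirichlet_nonneg: assumes "stochastic P" "\<And>x. 0 \<le> \<pi> x" shows "0 \<le> dirichlet P \<pi> \<phi>"
  unfolding dirichlet_def using assms by (auto simp: stochastic_def intro!: sum_nonneg mult_nonneg_nonneg)

lemma poincare:
  fixes P :: "'a::finite \<Rightarrow> 'a \<Rightarrow> real"
  assumes erg: "ergodic P" and stat: "stationary P \<pi>" and rev: "reversible P \<pi>"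
  shows "ip \<pi> \<phi> \<phi> - (\<Sum>x\<in>UNIV. \<pi> x * \<phi> x)\<^sup>2
     \<le> (real (mix_time P \<pi> (1 / (2 * exp 1))) + 1) * dirichlet P \<pi> \<phi>"
proof -
  have st: "stochastic P" using erg by (simp add: ergodic_def)
  have pos: "\<And>x. 0 < \<pi> x" using pi_pos[OF st _ stat] erg by (simp add: ergodic_def)
  have nn: "\<And>x. 0 \<le> \<pi> x" using pos less_imp_le by blast
  have s1: "(\<Sum>x\<in>UNIV. \<pi> x) = 1" using stat by (simp add: stationary_def)
  define \<tau> where "\<tau> = mix_time P \<pi> (1 / (2 * exp 1))"
  have e0: "(0::real) < 1 / (2 * exp 1)" by simp
  have tau1: "\<tau> \<ge> 1" unfolding \<tau>_def by (rule mix_time_prop(1)[OF erg stat e0])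
  have mix: "\<And>x. tvd (mpow P \<tau> x) \<pi> \<le> 1 / (2 * exp 1)"
    unfolding \<tau>_def by (rule mix_time_prop(2)[OF erg stat e0]) simp
  define m where "m = (\<Sum>x\<in>UNIV. \<pi> x * \<phi> x)"
  define \<psi> where "\<psi> = (\<lambda>x. \<phi> x - m)"
  have var: "ip \<pi> \<psi> \<psi> = ip \<pi> \<phi> \<phi> - m\<^sup>2"
  proof -
    have "ip \<pi> \<psi> \<psi> = (\<Sum>x\<in>UNIV. \<pi> x * \<phi> x * \<phi> x - 2 * m * (\<pi> x * \<phi> x) + m\<^sup>2 * \<pi> x)"
      unfolding ip_def \<psi>_def by (intro sum.cong refl) (simp add: algebra_simps power2_eq_square)
    also have "\<dots> = ip \<pi> \<phi> \<phi> - 2 * m * m + m\<^sup>2 * 1"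
      unfolding ip_def m_def
      by (simp add: sum.distrib sum_subtractf sum_distrib_left[symmetric] s1)
    finally show ?thesis by (simp add: power2_eq_square)
  qed
  have dsh: "dirichlet P \<pi> \<psi> = dirichlet P \<pi> \<phi>" unfolding \<psi>_def by (rule dirichlet_shift)
  have mean\<psi>: "(\<Sum>x\<in>UNIV. \<pi> x * \<psi> x) = 0"
    unfolding \<psi>_def m_def by (simp add: right_diff_distrib sum_subtractf sum_distrib_right[symmetric] s1)
  define \<psi>n where "\<psi>n = (\<lambda>n x. \<Sum>y\<in>UNIV. mpow P n x y * \<psi> y)"
  have \<psi>0: "\<psi>n 0 = \<psi>" unfolding \<psi>n_def by (simp add: fun_eq_iff)
  have \<psi>S: "Kop P (\<psi>n n) = \<psi>n (Suc n)" for n unfolding \<psi>n_def by (rule Kop_mpow)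
  have meann: "(\<Sum>x\<in>UNIV. \<pi> x * \<psi>n n x) = 0" for n
  proof (induction n)
    case 0 then show ?case using mean\<psi> \<psi>0 by simp
  next
    case (Suc n) then show ?case using Kop_mean[OF stat, of "\<psi>n n"] \<psi>S[of n] by simp
  qed
  define b where "b = (\<lambda>n. ip \<pi> (\<psi>n n) (\<psi>n n))"
  have bnn: "\<And>n. 0 \<le> b n" unfolding b_def by (rule ip_sq_nonneg[OF nn])
  have lc: "(b (Suc n))\<^sup>2 \<le> b n * b (Suc (Suc n))" for n
  proof -
    have "b (Suc n) = ip \<pi> (Kop P (\<psi>n n)) (Kop P (\<psi>n n))" unfolding b_def \<psi>S ..
    also have "\<dots> = ip \<pi> (\<psi>n n) (Kop P (Kop P (\<psi>n n)))" using Kop_selfadj[OF rev] by simp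
    also have "\<dots> = ip \<pi> (\<psi>n n) (\<psi>n (Suc (Suc n)))" by (simp add: \<psi>S)
    finally show ?thesis unfolding b_def using ip_cs[OF nn] by simp
  qed
  have contr: "osc (\<lambda>x. \<Sum>y\<in>UNIV. mpow P \<tau> x y * g y) \<le> exp (-1) * osc g" for g
  proof (rule osc_contract)
    fix x x' show "(\<Sum>y\<in>UNIV. mpow P \<tau> x y) = (\<Sum>y\<in>UNIV. mpow P \<tau> x' y)" by (simp add: mpow_rowsum st)
  next
    fix x x'
    have "(\<Sum>y\<in>UNIV. \<bar>mpow P \<tau> x y - mpow P \<tau> x' y\<bar>)
       \<le> (\<Sum>y\<in>UNIV. \<bar>mpow P \<tau> x y - \<pi> y\<bar> + \<bar>mpow P \<tau> x' y - \<pi> y\<bar>)"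
      by (rule sum_mono) linarith
    also have "\<dots> = 2 * tvd (mpow P \<tau> x) \<pi> + 2 * tvd (mpow P \<tau> x') \<pi>"
      unfolding tvd_def by (simp add: sum.distrib)
    also have "\<dots> \<le> 2 * (1 / (2 * exp 1)) + 2 * (1 / (2 * exp 1))" using mix[of x] mix[of x'] by linarith
    also have "\<dots> = 2 * exp (-1)" by (simp add: exp_minus field_simps)
    finally show "(\<Sum>y\<in>UNIV. \<bar>mpow P \<tau> x y - mpow P \<tau> x' y\<bar>) \<le> 2 * exp (-1)" .
  qed
  have oscn: "osc (\<psi>n (k * \<tau>)) \<le> exp (-1) ^ k * osc \<psi>" for k
    unfolding \<psi>n_def using doeblin_iter[OF st contr, where k=k and j=0 and g=\<psi>] by simp
  have bosc: "b n \<le> (osc (\<psi>n n))\<^sup>2" for n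
  proof -
    have "b n \<le> (\<Sum>x\<in>UNIV. \<pi> x * (osc (\<psi>n n))\<^sup>2)"
      unfolding b_def ip_def
    proof (rule sum_mono)
      fix x
      have "\<bar>\<psi>n n x\<bar> \<le> osc (\<psi>n n)" by (rule meanzero_bound[OF pos meann])
      then have "(\<psi>n n x)\<^sup>2 \<le> (osc (\<psi>n n))\<^sup>2" by (metis abs_le_square_iff abs_of_nonneg osc_nonneg)
      then have "\<pi> x * (\<psi>n n x)\<^sup>2 \<le> \<pi> x * (osc (\<psi>n n))\<^sup>2" by (rule mult_left_mono) (rule nn)
      then show "\<pi> x * \<psi>n n x * \<psi>n n x \<le> \<pi> x * (osc (\<psi>n n))\<^sup>2" by (simp add: power2_eq_square mult_ac)
    qed
    also have "\<dots> = (osc (\<psi>n n))\<^sup>2" by (simp add: sum_distrib_right[symmetric] s1)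
    finally show ?thesis .
  qed
  have main: "ip \<pi> \<psi> \<psi> \<le> (real \<tau> + 1) * dirichlet P \<pi> \<psi>"
  proof (cases "b 0 = 0")
    case True
    then show ?thesis using \<psi>0 b_def dirichlet_nonneg[OF st nn, where \<phi>=\<psi>] by simp
  next
    case False
    then have b0: "b 0 > 0" using bnn[of 0] by simp
    define s where "s = b 1 / b 0"
    have s0: "s \<ge> 0" unfolding s_def using bnn b0 by simp
    define C where "C = (osc \<psi>)\<^sup>2 / b 0"
    have pw: "(s ^ \<tau> * exp 2) ^ k \<le> C" for k
    proof -
      have "b 1 ^ (k * \<tau>) * b 0 \<le> b 0 ^ (k * \<tau>) * b (k * \<tau>)" by (rule logconvex_seq[where b=b, OF bnn lc])
      then have "s ^ (k * \<tau>) \<le> b (k * \<tau>) / b 0"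
        unfolding s_def using b0 by (simp add: power_divide field_simps)
      also have "\<dots> \<le> (osc (\<psi>n (k * \<tau>)))\<^sup>2 / b 0" using bosc b0 by (simp add: divide_right_mono)
      also have "\<dots> \<le> (exp (-1) ^ k * osc \<psi>)\<^sup>2 / b 0"
        using oscn[of k] osc_nonneg[of "\<psi>n (k * \<tau>)"] b0
        by (intro divide_right_mono power_mono) auto
      also have "\<dots> = exp (-1) ^ (2 * k) * C"
      proof -
        have "(exp (-1::real) ^ k)\<^sup>2 = exp (-1) ^ (2 * k)" by (metis power_mult mult.commute)
        then show ?thesis unfolding C_def by (simp add: power_mult_distrib)
      qed
      finally have "s ^ (k * \<tau>) \<le> exp (-1) ^ (2 * k) * C" .
      moreover have AB: "exp (-1::real) ^ (2 * k) * exp (2::real) ^ k = 1"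
      proof -
        have "exp (-1::real) * exp (-1) * exp 2 = 1" by (simp add: mult_exp_exp)
        then have "(exp (-1::real) * exp (-1) * exp 2) ^ k = 1" by simp
        then show ?thesis by (simp add: power_mult power2_eq_square power_mult_distrib)
      qed
      ultimately have "s ^ (k * \<tau>) * exp (2::real) ^ k \<le> exp (-1) ^ (2 * k) * C * exp (2::real) ^ k"
        by (intro mult_right_mono) auto
      also have "\<dots> = C" using AB by (simp add: mult_ac)
      finally have "s ^ (k * \<tau>) * exp (2::real) ^ k \<le> C" .
      then show ?thesis by (simp add: power_mult_distrib power_mult mult.commute)
    qed
    have sle: "s ^ \<tau> * exp 2 \<le> 1"
    proof (rule ccontr)
      assume "\<not> ?thesis"
      then obtain k where "C < (s ^ \<tau> * exp 2) ^ k" using real_arch_pow[of "s ^ \<tau> * exp 2" C] by auto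
      then show False using pw[of k] by simp
    qed
    have sle2: "s \<le> exp (- 2 / real \<tau>)"
    proof (rule ccontr)
      assume "\<not> ?thesis"
      then have "exp (- 2 / real \<tau>) ^ \<tau> < s ^ \<tau>"
        using tau1 by (intro power_strict_mono) auto
      moreover have "exp (- 2 / real \<tau>) ^ \<tau> = exp (-2)"
        using tau1 by (simp add: exp_of_nat_mult[symmetric])
      ultimately have "exp (-2) * exp 2 < s ^ \<tau> * exp 2" by simp
      then show False using sle by (simp add: mult_exp_exp)
    qed
    define \<rho> where "\<rho> = exp (- 1 / real \<tau>)"
    have rho2: "\<rho>\<^sup>2 = exp (- 2 / real \<tau>)" unfolding \<rho>_def by (simp add: power2_eq_square mult_exp_exp)
    have "(ip \<pi> \<psi> (Kop P \<psi>))\<^sup>2 \<le> b 0 * b 1"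
      using ip_cs[OF nn, where f=\<psi> and g="Kop P \<psi>"] \<psi>0 \<psi>S[of 0] unfolding b_def by simp
    also have "\<dots> = s * (b 0)\<^sup>2" unfolding s_def using b0 by (simp add: power2_eq_square)
    also have "\<dots> \<le> \<rho>\<^sup>2 * (b 0)\<^sup>2" using sle2 rho2 by (simp add: mult_right_mono)
    also have "\<dots> = (\<rho> * b 0)\<^sup>2" by (simp add: power_mult_distrib)
    finally have "ip \<pi> \<psi> (Kop P \<psi>) \<le> \<rho> * b 0"
      by (rule power2_le_imp_le) (use b0 in \<open>simp add: \<rho>_def\<close>)
    then have D: "(1 - \<rho>) * b 0 \<le> dirichlet P \<pi> \<psi>"
      using dirichlet_eq[OF st stat, of \<psi>] \<psi>0 unfolding b_def by (simp add: algebra_simps)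
    have "1 + 1 / real \<tau> \<le> exp (1 / real \<tau>)" by (rule exp_ge_add_one_self)
    then have "\<rho> \<le> 1 / (1 + 1 / real \<tau>)" unfolding \<rho>_def
      using tau1 by (simp add: exp_minus field_simps)
    also have "\<dots> = real \<tau> / (real \<tau> + 1)" using tau1 by (simp add: field_simps)
    finally have "1 / (real \<tau> + 1) \<le> 1 - \<rho>" using tau1 by (simp add: field_simps)
    then have "(1 / (real \<tau> + 1)) * b 0 \<le> (1 - \<rho>) * b 0"
      by (rule mult_right_mono) (use b0 in auto)
    then have "b 0 / (real \<tau> + 1) \<le> dirichlet P \<pi> \<psi>" using D by simp
    then show ?thesis using \<psi>0 unfolding b_def by (simp add: field_simps)
  qed
  then show ?thesis using var dsh unfolding m_def \<tau>_def by simp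
qed



lemma edge_mult_count: "edge_mult e \<gamma> = count_list (path_edges \<gamma>) e"
proof -
  have "length (filter (\<lambda>e'. e' = e) xs) = count_list xs e" for xs
    by (induction xs) auto
  then show ?thesis unfolding edge_mult_def by simp
qed

lemma length_path_edges: "length (path_edges \<gamma>) = path_len \<gamma>"
  unfolding path_edges_def path_len_def by simp

lemma length_count_sum:
  fixes xs :: "'b::finite list"
  shows "length xs = (\<Sum>e\<in>UNIV. count_list xs e)"
proof -
  have "sum_list (map (\<lambda>_. 1::nat) xs) = (\<Sum>e\<in>UNIV. count_list xs e * 1)"
    by (rule sum_list_map_eq_sum_count2) auto
  then show ?thesis by (simp add: sum_list_triv)
qed

lemma finite_paths_between:
  fixes P :: "'a::finite \<Rightarrow> 'a \<Rightarrow> real"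
  shows "finite (paths_between P x y)"
proof -
  define N where "N = 2 * CARD('a \<times> 'a) + 1"
  have "paths_between P x y \<subseteq> {xs. set xs \<subseteq> UNIV \<and> length xs \<le> N}"
  proof
    fix \<gamma> assume g: "\<gamma> \<in> paths_between P x y"
    then have m2: "\<And>e. count_list (path_edges \<gamma>) e \<le> 2"
      unfolding paths_between_def by (auto simp: edge_mult_count)
    have "length (path_edges \<gamma>) = (\<Sum>e\<in>UNIV. count_list (path_edges \<gamma>) e)" by (rule length_count_sum)
    also have "\<dots> \<le> (\<Sum>e\<in>(UNIV::('a\<times>'a) set). 2)" by (rule sum_mono) (rule m2)
    also have "\<dots> = 2 * CARD('a \<times> 'a)" by simp
    finally have "length \<gamma> - 1 \<le> 2 * CARD('a \<times> 'a)" using length_path_edges[of \<gamma>] by (simp add: path_len_def)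
    then show "\<gamma> \<in> {xs. set xs \<subseteq> UNIV \<and> length xs \<le> N}" unfolding N_def by simp
  qed
  moreover have "finite {xs. set xs \<subseteq> (UNIV::'a set) \<and> length xs \<le> N}"
    by (rule finite_lists_length_le) simp
  ultimately show ?thesis by (rule finite_subset)
qed

lemma finite_all_paths:
  fixes P :: "'a::finite \<Rightarrow> 'a \<Rightarrow> real"
  shows "finite (all_paths P P')"
  unfolding all_paths_def by (auto intro: finite_paths_between)

lemma telescope:
  fixes \<phi> :: "'b \<Rightarrow> real"
  shows "\<phi> a - \<phi> (last (a # xs)) = sum_list (map (\<lambda>e. \<phi> (fst e) - \<phi> (snd e)) (path_edges (a # xs)))"
proof (induction xs arbitrary: a)
  case Nil
  then show ?case by (simp add: path_edges_def)
next
  case (Cons b ys)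
  have "path_edges (a # b # ys) = (a, b) # path_edges (b # ys)" by (simp add: path_edges_def)
  then show ?case using Cons[of b] by simp
qed

lemma list_cs:
  fixes g :: "'b \<Rightarrow> real"
  shows "(sum_list (map g xs))\<^sup>2 \<le> real (length xs) * sum_list (map (\<lambda>e. (g e)\<^sup>2) xs)"
proof -
  have "(\<Sum>i<length xs. g (xs ! i) * 1)\<^sup>2 \<le> (\<Sum>i<length xs. (g (xs ! i))\<^sup>2) * (\<Sum>i<length xs. 1\<^sup>2)"
    by (rule Cauchy_Schwarz_ineq_sum)
  moreover have "sum_list (map g xs) = (\<Sum>i<length xs. g (xs ! i))"
    by (simp add: sum_list_sum_nth atLeast0LessThan)
  moreover have "sum_list (map (\<lambda>e. (g e)\<^sup>2) xs) = (\<Sum>i<length xs. (g (xs ! i))\<^sup>2)"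
    by (simp add: sum_list_sum_nth atLeast0LessThan)
  ultimately show ?thesis by (simp add: mult.commute)
qed

lemma sum_list_count_real:
  assumes "set xs \<subseteq> X" "finite X"
  shows "sum_list (map f xs) = (\<Sum>e\<in>X. real (count_list xs e) * (f e::real))"
  using assms(1)
proof (induction xs)
  case Nil then show ?case by simp
next
  case (Cons a xs)
  then have aX: "a \<in> X" and IH: "sum_list (map f xs) = (\<Sum>e\<in>X. real (count_list xs e) * f e)" by auto
  have "(\<Sum>e\<in>X. real (count_list (a # xs) e) * f e)
      = (\<Sum>e\<in>X. real (count_list xs e) * f e + (if e = a then f e else 0))"
    by (rule sum.cong) (auto simp: algebra_simps)
  also have "\<dots> = (\<Sum>e\<in>X. real (count_list xs e) * f e) + (\<Sum>e\<in>X. if e = a then f e else 0)"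
    by (rule sum.distrib)
  also have "(\<Sum>e\<in>X. if e = a then f e else 0) = f a" using aX assms(2) by simp
  finally show ?case using IH by simp
qed

lemma path_bound:
  fixes P :: "'a::finite \<Rightarrow> 'a \<Rightarrow> real"
  assumes "\<gamma> \<in> paths_between P x y"
  shows "(\<phi> x - \<phi> y)\<^sup>2 \<le> real (path_len \<gamma>) *
     (\<Sum>e\<in>edge_set P. real (edge_mult e \<gamma>) * (\<phi> (fst e) - \<phi> (snd e))\<^sup>2)"
proof -
  obtain a xs where g: "\<gamma> = a # xs" using assms unfolding paths_between_def by (cases \<gamma>) auto
  have xy: "x = a" "y = last (a # xs)" using assms g unfolding paths_between_def by auto
  have sub: "set (path_edges \<gamma>) \<subseteq> edge_set P" using assms unfolding paths_between_def by auto
  have "(\<phi> x - \<phi> y)\<^sup>2 = (sum_list (map (\<lambda>e. \<phi> (fst e) - \<phi> (snd e)) (path_edges \<gamma>)))\<^sup>2"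
    using telescope[of \<phi> a xs] xy g by simp
  also have "\<dots> \<le> real (length (path_edges \<gamma>)) * sum_list (map (\<lambda>e. (\<phi> (fst e) - \<phi> (snd e))\<^sup>2) (path_edges \<gamma>))"
    by (rule list_cs)
  also have "sum_list (map (\<lambda>e. (\<phi> (fst e) - \<phi> (snd e))\<^sup>2) (path_edges \<gamma>))
      = (\<Sum>e\<in>edge_set P. real (count_list (path_edges \<gamma>) e) * (\<phi> (fst e) - \<phi> (snd e))\<^sup>2)"
    by (rule sum_list_count_real[OF sub]) simp
  finally show ?thesis by (simp add: length_path_edges edge_mult_count)
qed



lemma double_to_pairs:
  fixes h :: "'a::finite \<Rightarrow> 'a \<Rightarrow> real"
  assumes "\<And>x y. (x, y) \<notin> S \<Longrightarrow> h x y = 0"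
  shows "(\<Sum>x\<in>UNIV. \<Sum>y\<in>UNIV. h x y) = (\<Sum>p\<in>S. h (fst p) (snd p))"
proof -
  have "(\<Sum>x\<in>UNIV. \<Sum>y\<in>UNIV. h x y) = (\<Sum>p\<in>UNIV \<times> UNIV. h (fst p) (snd p))"
    by (simp add: sum.cartesian_product case_prod_beta)
  also have "\<dots> = (\<Sum>p\<in>UNIV. h (fst p) (snd p))" by simp
  also have "\<dots> = (\<Sum>p\<in>S. h (fst p) (snd p))"
    by (rule sum.mono_neutral_right) (auto simp: assms)
  finally show ?thesis .
qed

lemma comparison:
  fixes P P' :: "'a::finite \<Rightarrow> 'a \<Rightarrow> real"
  assumes stP: "stochastic P" and stP': "stochastic P'"
    and pos: "\<And>x. 0 < \<pi> x" and flow: "is_flow P P' \<pi> f"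
  shows "dirichlet P' \<pi> \<phi> \<le> flow_congestion P \<pi> P' f * dirichlet P \<pi> \<phi>"
proof -
  define E where "E = edge_set P"
  define E' where "E' = edge_set P'"
  define g where "g = (\<lambda>e::'a\<times>'a. (\<phi> (fst e) - \<phi> (snd e))\<^sup>2)"
  define A where "A = flow_congestion P \<pi> P' f"
  define AP where "AP = all_paths P P'"
  have finAP: "finite AP" unfolding AP_def by (rule finite_all_paths)
  have finE: "finite E" "finite E'" by auto
  have gnn: "\<And>e. 0 \<le> g e" unfolding g_def by simp
  have P'nn: "\<And>x y. 0 \<le> P' x y" and Pnn: "\<And>x y. 0 \<le> P x y" using stP stP' by (auto simp: stochastic_def)
  have fnn: "\<And>\<gamma>. \<gamma> \<in> AP \<Longrightarrow> 0 \<le> f \<gamma>" using flow unfolding is_flow_def AP_def by auto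
  have fsum: "\<And>x y. (x, y) \<in> E' \<Longrightarrow> (\<Sum>\<gamma>\<in>paths_between P x y. f \<gamma>) = \<pi> x * P' x y"
    using flow unfolding is_flow_def E'_def by auto
  have sub: "\<And>x y. (x, y) \<in> E' \<Longrightarrow> paths_between P x y \<subseteq> AP"
    unfolding AP_def all_paths_def E'_def by auto
  define W where "W = (\<lambda>\<gamma>. f \<gamma> * real (path_len \<gamma>) * (\<Sum>e\<in>E. real (edge_mult e \<gamma>) * g e))"
  have "2 * dirichlet P' \<pi> \<phi> = (\<Sum>p\<in>E'. \<pi> (fst p) * P' (fst p) (snd p) * g p)"
    unfolding dirichlet_def g_def
    by (subst double_to_pairs[where S=E']) (auto simp: E'_def edge_set_def P'nn intro: antisym)
  also have "\<dots> \<le> (\<Sum>p\<in>E'. \<Sum>\<gamma>\<in>paths_between P (fst p) (snd p). W \<gamma>)"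
  proof (rule sum_mono)
    fix p assume p: "p \<in> E'"
    obtain x y where xy: "p = (x, y)" by force
    have "\<pi> x * P' x y * g (x, y) = (\<Sum>\<gamma>\<in>paths_between P x y. f \<gamma> * g (x, y))"
      using fsum[of x y] p xy by (simp flip: sum_distrib_right)
    also have "\<dots> \<le> (\<Sum>\<gamma>\<in>paths_between P x y. W \<gamma>)"
    proof (rule sum_mono)
      fix \<gamma> assume g: "\<gamma> \<in> paths_between P x y"
      have "f \<gamma> * g (x, y) \<le> f \<gamma> * (real (path_len \<gamma>) * (\<Sum>e\<in>E. real (edge_mult e \<gamma>) * g e))"
        using path_bound[OF g, of \<phi>] fnn[of \<gamma>] sub[of x y] g p xy
        unfolding g_def E_def by (intro mult_left_mono) auto
      then show "f \<gamma> * g (x, y) \<le> W \<gamma>" unfolding W_def by (simp add: mult.assoc)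
    qed
    finally show "\<pi> (fst p) * P' (fst p) (snd p) * g p \<le> (\<Sum>\<gamma>\<in>paths_between P (fst p) (snd p). W \<gamma>)"
      using xy by simp
  qed
  also have "\<dots> = (\<Sum>\<gamma>\<in>AP. W \<gamma>)"
  proof -
    have "AP = (\<Union>p\<in>E'. paths_between P (fst p) (snd p))"
      unfolding AP_def all_paths_def E'_def by (auto simp: case_prod_beta)
    moreover have "sum W (\<Union>p\<in>E'. paths_between P (fst p) (snd p))
        = (\<Sum>p\<in>E'. sum W (paths_between P (fst p) (snd p)))"
    proof (rule sum.UNION_disjoint)
      show "\<forall>p\<in>E'. \<forall>q\<in>E'. p \<noteq> q \<longrightarrow> paths_between P (fst p) (snd p) \<inter> paths_between P (fst q) (snd q) = {}"
        unfolding paths_between_def by (auto simp: prod_eq_iff)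
    qed (auto intro: finite_paths_between)
    ultimately show ?thesis by simp
  qed
  also have "\<dots> = (\<Sum>e\<in>E. g e * (\<Sum>\<gamma>\<in>AP. real (edge_mult e \<gamma>) * real (path_len \<gamma>) * f \<gamma>))"
  proof -
    have "(\<Sum>\<gamma>\<in>AP. W \<gamma>) = (\<Sum>\<gamma>\<in>AP. \<Sum>e\<in>E. g e * (real (edge_mult e \<gamma>) * real (path_len \<gamma>) * f \<gamma>))"
      unfolding W_def by (simp add: sum_distrib_left sum_distrib_right mult_ac)
    also have "\<dots> = (\<Sum>e\<in>E. \<Sum>\<gamma>\<in>AP. g e * (real (edge_mult e \<gamma>) * real (path_len \<gamma>) * f \<gamma>))"
      by (rule sum.swap)
    finally show ?thesis by (simp add: sum_distrib_left)
  qed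
  also have "\<dots> \<le> (\<Sum>e\<in>E. g e * (\<pi> (fst e) * P (fst e) (snd e) * A))"
  proof (rule sum_mono)
    fix e assume e: "e \<in> E"
    obtain z w where zw: "e = (z, w)" by force
    have pp: "\<pi> z * P z w > 0" using e zw pos[of z] unfolding E_def edge_set_def by simp
    have "(\<Sum>\<gamma>\<in>AP. real (edge_mult e \<gamma>) * real (path_len \<gamma>) * f \<gamma>)
        = (\<Sum>\<gamma>\<in>{\<gamma>\<in>AP. edge_mult (z, w) \<gamma> > 0}. real (edge_mult (z, w) \<gamma>) * real (path_len \<gamma>) * f \<gamma>)"
      unfolding zw by (rule sum.mono_neutral_right[OF finAP]) auto
    also have "\<dots> = \<pi> z * P z w * flow_congestion_edge P \<pi> P' f z w"
    proof -
      have "\<pi> z \<noteq> 0" "P z w \<noteq> 0" using pp by auto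
      then show ?thesis unfolding flow_congestion_edge_def AP_def by (simp add: field_simps)
    qed
    also have "\<dots> \<le> \<pi> z * P z w * A"
    proof -
      have "flow_congestion_edge P \<pi> P' f z w \<le> A"
        unfolding A_def flow_congestion_def
        by (rule Max_ge) (use e zw E_def in auto)
      then show ?thesis using pp by (simp add: mult_left_mono)
    qed
    finally show "g e * (\<Sum>\<gamma>\<in>AP. real (edge_mult e \<gamma>) * real (path_len \<gamma>) * f \<gamma>)
        \<le> g e * (\<pi> (fst e) * P (fst e) (snd e) * A)"
      using zw gnn[of e] by (simp add: mult_left_mono)
  qed
  also have "\<dots> = A * (\<Sum>p\<in>E. \<pi> (fst p) * P (fst p) (snd p) * g p)"
    by (simp add: sum_distrib_left mult_ac)
  also have "(\<Sum>p\<in>E. \<pi> (fst p) * P (fst p) (snd p) * g p) = 2 * dirichlet P \<pi> \<phi>"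
    unfolding dirichlet_def g_def
    by (subst double_to_pairs[where S=E]) (auto simp: E_def edge_set_def Pnn intro: antisym)
  finally show ?thesis unfolding A_def by simp
qed



definition pois :: "(nat \<Rightarrow> real) \<Rightarrow> real \<Rightarrow> real" where
  "pois a t = (\<Sum>k. exp (- t) * t ^ k / fact k * a k)"

lemma cont_kernel_pois: "cont_kernel P t x y = pois (\<lambda>k. mpow P k x y) t"
  unfolding cont_kernel_def pois_def ..

lemma coef_summable:
  fixes a :: "nat \<Rightarrow> real"
  assumes "\<And>k. \<bar>a k\<bar> \<le> M"
  shows "summable (\<lambda>k. a k / fact k * y ^ k)"
proof -
  have s: "summable (\<lambda>k. M * (inverse (fact k) * \<bar>y\<bar> ^ k))"
    by (rule summable_mult) (rule summable_exp)
  have b: "norm (a n / fact n * y ^ n) \<le> M * (inverse (fact n) * \<bar>y\<bar> ^ n)" for n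
  proof -
    have "norm (a n / fact n * y ^ n) = \<bar>a n\<bar> * (inverse (fact n) * \<bar>y\<bar> ^ n)"
      by (simp add: abs_mult power_abs divide_inverse)
    also have "\<dots> \<le> M * (inverse (fact n) * \<bar>y\<bar> ^ n)"
      by (rule mult_right_mono) (auto simp: assms)
    finally show ?thesis .
  qed
  show ?thesis by (rule summable_comparison_test'[OF s b])
qed

lemma pois_eq:
  fixes a :: "nat \<Rightarrow> real"
  assumes "\<And>k. \<bar>a k\<bar> \<le> M"
  shows "pois a t = exp (- t) * (\<Sum>k. a k / fact k * t ^ k)"
proof -
  have "pois a t = (\<Sum>k. exp (- t) * (a k / fact k * t ^ k))"
    unfolding pois_def by (simp add: mult_ac)
  also have "\<dots> = exp (- t) * (\<Sum>k. a k / fact k * t ^ k)"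
    by (rule suminf_mult) (rule coef_summable[OF assms])
  finally show ?thesis .
qed

lemma pois_summable:
  fixes a :: "nat \<Rightarrow> real"
  assumes "\<And>k. \<bar>a k\<bar> \<le> M"
  shows "summable (\<lambda>k. exp (- t) * t ^ k / fact k * a k)"
proof -
  have "summable (\<lambda>k. exp (- t) * (a k / fact k * t ^ k))"
    by (rule summable_mult) (rule coef_summable[OF assms])
  moreover have "(\<lambda>k. exp (- t) * (a k / fact k * t ^ k)) = (\<lambda>k. exp (- t) * t ^ k / fact k * a k)"
    by (simp add: fun_eq_iff divide_inverse mult_ac)
  ultimately show ?thesis by simp
qed

lemma pois_deriv:
  fixes a :: "nat \<Rightarrow> real"
  assumes "\<And>k. \<bar>a k\<bar> \<le> M"
  shows "((pois a) has_real_derivative (pois (\<lambda>k. a (Suc k)) t - pois a t)) (at t)"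
proof -
  define c where "c = (\<lambda>k. a k / fact k)"
  define G where "G = (\<lambda>y. \<Sum>k. c k * y ^ k)"
  have Gd: "(G has_real_derivative (\<Sum>k. diffs c k * t ^ k)) (at t)"
    unfolding G_def by (rule termdiffs_strong_converges_everywhere) (unfold c_def, rule coef_summable[OF assms])
  have dc: "diffs c k = a (Suc k) / fact k" for k
  proof -
    have f: "fact (Suc k) = (of_nat (Suc k) :: real) * fact k" by (rule fact_Suc)
    have nz: "(of_nat (Suc k) :: real) \<noteq> 0" by (rule of_nat_neq_0)
    show ?thesis unfolding diffs_def c_def f using nz by (simp del: of_nat_Suc fact_Suc)
  qed
  have pa: "pois a = (\<lambda>y. exp (- y) * G y)"
    using pois_eq[OF assms] unfolding G_def c_def by (simp add: fun_eq_iff)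
  have assms': "\<And>k. \<bar>a (Suc k)\<bar> \<le> M" using assms by simp
  have ps: "pois (\<lambda>k. a (Suc k)) t = exp (- t) * (\<Sum>k. diffs c k * t ^ k)"
    using pois_eq[OF assms', where t=t] by (simp add: dc)
  have "((\<lambda>y. exp (- y) * G y) has_real_derivative (- exp (- t)) * G t + (\<Sum>k. diffs c k * t ^ k) * exp (- t)) (at t)"
    by (rule DERIV_mult[OF _ Gd]) (auto intro!: derivative_eq_intros)
  then show ?thesis unfolding pa ps by (simp add: algebra_simps)
qed

lemma pois_lin:
  fixes b :: "'b \<Rightarrow> nat \<Rightarrow> real"
  assumes "finite Z" "\<And>z k. \<bar>b z k\<bar> \<le> M"
  shows "pois (\<lambda>k. \<Sum>z\<in>Z. b z k * c z) t = (\<Sum>z\<in>Z. pois (b z) t * c z)"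
proof -
  have "pois (\<lambda>k. \<Sum>z\<in>Z. b z k * c z) t = (\<Sum>k. \<Sum>z\<in>Z. exp (- t) * t ^ k / fact k * b z k * c z)"
    unfolding pois_def by (simp add: sum_distrib_left sum_divide_distrib mult_ac)
  also have "\<dots> = (\<Sum>z\<in>Z. \<Sum>k. exp (- t) * t ^ k / fact k * b z k * c z)"
    by (rule suminf_sum) (intro summable_mult2 pois_summable[where M=M] assms(2))
  also have "\<dots> = (\<Sum>z\<in>Z. pois (b z) t * c z)"
    unfolding pois_def by (intro sum.cong refl suminf_mult2[symmetric] pois_summable[where M=M] assms(2))
  finally show ?thesis .
qed

lemma pois_const: "pois (\<lambda>k. 1) t = 1"
proof -
  have "pois (\<lambda>k. 1) t = exp (- t) * (\<Sum>k. 1 / fact k * t ^ k)"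
    by (rule pois_eq[of _ 1]) simp
  also have "(\<Sum>k. 1 / fact k * t ^ k) = exp t"
    using exp_converges[of t] by (simp add: sums_iff divide_inverse mult.commute scaleR_conv_of_real)
  finally show ?thesis by (simp add: exp_minus)
qed

lemma pois_zero: "pois a 0 = a 0"
proof -
  have "pois a 0 = (\<Sum>k. if k = 0 then a 0 else 0)"
    unfolding pois_def by (intro arg_cong[where f=suminf]) (auto simp: fun_eq_iff)
  also have "\<dots> = a 0" using suminf_finite[of "{0}" "\<lambda>k. if k = 0 then a 0 else 0"] by simp
  finally show ?thesis .
qed

lemma mpow_le1: "stochastic P \<Longrightarrow> \<bar>mpow P k x y\<bar> \<le> 1"
proof -
  assume st: "stochastic P"
  have "mpow P k x y \<le> (\<Sum>y\<in>UNIV. mpow P k x y)"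
    by (rule member_le_sum) (auto simp: mpow_nonneg st)
  then show ?thesis using mpow_rowsum[OF st] mpow_nonneg[OF st] by (simp add: abs_le_iff)
qed

lemma cont_kernel_deriv:
  assumes st: "stochastic P"
  shows "((\<lambda>t. cont_kernel P t x y) has_real_derivative
     ((\<Sum>z\<in>UNIV. cont_kernel P t x z * P z y) - cont_kernel P t x y)) (at t)"
proof -
  have d: "((pois (\<lambda>k. mpow P k x y)) has_real_derivative
      (pois (\<lambda>k. mpow P (Suc k) x y) t - pois (\<lambda>k. mpow P k x y) t)) (at t)"
    by (rule pois_deriv[of _ 1]) (rule mpow_le1[OF st])
  have "pois (\<lambda>k. mpow P (Suc k) x y) t = (\<Sum>z\<in>UNIV. pois (\<lambda>k. mpow P k x z) t * P z y)"
    using pois_lin[of UNIV "\<lambda>z k. mpow P k x z" 1 "\<lambda>z. P z y" t] mpow_le1[OF st] by simp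
  then show ?thesis using d unfolding cont_kernel_pois by (simp add: fun_eq_iff)
qed

lemma cont_kernel_sum: assumes st: "stochastic P"
  shows "(\<Sum>y\<in>UNIV. cont_kernel P t x y) = 1"
proof -
  have "(\<Sum>y\<in>UNIV. cont_kernel P t x y) = (\<Sum>y\<in>UNIV. pois (\<lambda>k. mpow P k x y) t * 1)"
    unfolding cont_kernel_pois by simp
  also have "\<dots> = pois (\<lambda>k. \<Sum>y\<in>UNIV. mpow P k x y * 1) t"
    by (rule pois_lin[of UNIV _ 1, symmetric]) (auto simp: mpow_le1 st)
  also have "\<dots> = 1" using mpow_rowsum[OF st] pois_const by simp
  finally show ?thesis .
qed

lemma cont_kernel_zero: "cont_kernel P 0 x y = (if x = y then 1 else 0)"
  unfolding cont_kernel_pois pois_zero by simp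



lemma V_deriv:
  fixes P :: "'a::finite \<Rightarrow> 'a \<Rightarrow> real"
  assumes st: "stochastic P" and stat: "stationary P \<pi>" and pos: "\<And>y. 0 < \<pi> y"
  shows "((\<lambda>t. \<Sum>y\<in>UNIV. (cont_kernel P t x y - \<pi> y)\<^sup>2 / \<pi> y) has_real_derivative
      (- 2 * dirichlet P \<pi> (\<lambda>y. (cont_kernel P t x y - \<pi> y) / \<pi> y))) (at t)"
proof -
  define \<mu> where "\<mu> = (\<lambda>y. cont_kernel P t x y)"
  define h where "h = (\<lambda>y. (\<mu> y - \<pi> y) / \<pi> y)"
  define \<mu>' where "\<mu>' = (\<lambda>y. (\<Sum>z\<in>UNIV. \<mu> z * P z y) - \<mu> y)"
  have each: "((\<lambda>t. (cont_kernel P t x y - \<pi> y)\<^sup>2 / \<pi> y) has_real_derivative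
      (2 * (\<mu> y - \<pi> y) * \<mu>' y / \<pi> y)) (at t)" for y
  proof -
    have d: "((\<lambda>t. cont_kernel P t x y) has_real_derivative \<mu>' y) (at t)"
      unfolding \<mu>'_def \<mu>_def by (rule cont_kernel_deriv[OF st])
    have "((\<lambda>t. (cont_kernel P t x y - \<pi> y) * (cont_kernel P t x y - \<pi> y) * inverse (\<pi> y)) has_real_derivative
      ((\<mu>' y - 0) * (\<mu> y - \<pi> y) + (\<mu>' y - 0) * (\<mu> y - \<pi> y)) * inverse (\<pi> y) + 0 * ((\<mu> y - \<pi> y) * (\<mu> y - \<pi> y))) (at t)"
      unfolding \<mu>_def by (intro DERIV_mult DERIV_diff d DERIV_const)
    then show ?thesis by (simp add: power2_eq_square divide_inverse algebra_simps)
  qed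
  have dV: "((\<lambda>t. \<Sum>y\<in>UNIV. (cont_kernel P t x y - \<pi> y)\<^sup>2 / \<pi> y) has_real_derivative
      (\<Sum>y\<in>UNIV. 2 * (\<mu> y - \<pi> y) * \<mu>' y / \<pi> y)) (at t)"
    by (rule DERIV_sum) (rule each)
  have stp: "\<And>y. (\<Sum>z\<in>UNIV. \<pi> z * P z y) = \<pi> y" using stat by (simp add: stationary_def)
  have mu_eq: "\<mu> z = \<pi> z * h z + \<pi> z" for z using pos[of z] unfolding h_def by (simp add: field_simps)
  have mu'_eq: "\<mu>' y = (\<Sum>z\<in>UNIV. \<pi> z * h z * P z y) - \<pi> y * h y" for y
  proof -
    have "(\<Sum>z\<in>UNIV. \<mu> z * P z y) = (\<Sum>z\<in>UNIV. \<pi> z * h z * P z y) + (\<Sum>z\<in>UNIV. \<pi> z * P z y)"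
      by (simp add: mu_eq algebra_simps sum.distrib)
    then show ?thesis unfolding \<mu>'_def using stp[of y] mu_eq[of y] by simp
  qed
  have "(\<Sum>y\<in>UNIV. 2 * (\<mu> y - \<pi> y) * \<mu>' y / \<pi> y)
      = (\<Sum>y\<in>UNIV. 2 * (h y * (\<Sum>z\<in>UNIV. \<pi> z * h z * P z y)) - 2 * (\<pi> y * h y * h y))"
  proof (rule sum.cong[OF refl])
    fix y
    have "2 * (\<mu> y - \<pi> y) * \<mu>' y / \<pi> y = 2 * h y * \<mu>' y" unfolding h_def by simp
    then show "2 * (\<mu> y - \<pi> y) * \<mu>' y / \<pi> y = 2 * (h y * (\<Sum>z\<in>UNIV. \<pi> z * h z * P z y)) - 2 * (\<pi> y * h y * h y)"
      unfolding mu'_eq by (simp add: algebra_simps)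
  qed
  also have "\<dots> = 2 * (\<Sum>y\<in>UNIV. \<Sum>z\<in>UNIV. h y * (\<pi> z * h z * P z y)) - 2 * ip \<pi> h h"
    unfolding ip_def by (simp add: sum_subtractf sum_distrib_left)
  also have "(\<Sum>y\<in>UNIV. \<Sum>z\<in>UNIV. h y * (\<pi> z * h z * P z y)) = ip \<pi> h (Kop P h)"
  proof -
    have "(\<Sum>y\<in>UNIV. \<Sum>z\<in>UNIV. h y * (\<pi> z * h z * P z y)) = (\<Sum>z\<in>UNIV. \<Sum>y\<in>UNIV. h y * (\<pi> z * h z * P z y))"
      by (rule sum.swap)
    also have "\<dots> = ip \<pi> h (Kop P h)" unfolding ip_def Kop_def by (simp add: sum_distrib_left mult_ac)
    finally show ?thesis .
  qed
  also have "2 * ip \<pi> h (Kop P h) - 2 * ip \<pi> h h = - 2 * dirichlet P \<pi> h"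
    using dirichlet_eq[OF st stat, of h] by simp
  finally show ?thesis using dV unfolding h_def \<mu>_def by simp
qed

lemma tvd_V:
  fixes \<mu> :: "'a::finite \<Rightarrow> real"
  assumes pos: "\<And>y. 0 < \<pi> y" and s1: "(\<Sum>y\<in>UNIV. \<pi> y) = 1"
  shows "tvd \<mu> \<pi> \<le> 1/2 * sqrt (\<Sum>y\<in>UNIV. (\<mu> y - \<pi> y)\<^sup>2 / \<pi> y)"
proof -
  have "(\<Sum>y\<in>UNIV. sqrt (\<pi> y) * (\<bar>\<mu> y - \<pi> y\<bar> / sqrt (\<pi> y)))\<^sup>2
      \<le> (\<Sum>y\<in>UNIV. (sqrt (\<pi> y))\<^sup>2) * (\<Sum>y\<in>UNIV. (\<bar>\<mu> y - \<pi> y\<bar> / sqrt (\<pi> y))\<^sup>2)"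
    by (rule Cauchy_Schwarz_ineq_sum)
  moreover have "sqrt (\<pi> y) * (\<bar>\<mu> y - \<pi> y\<bar> / sqrt (\<pi> y)) = \<bar>\<mu> y - \<pi> y\<bar>" for y
  proof -
    have "sqrt (\<pi> y) \<noteq> 0" using pos[of y] by simp
    then show ?thesis by simp
  qed
  moreover have "\<And>y. (sqrt (\<pi> y))\<^sup>2 = \<pi> y" using pos by (simp add: less_imp_le)
  moreover have "\<And>y. (\<bar>\<mu> y - \<pi> y\<bar> / sqrt (\<pi> y))\<^sup>2 = (\<mu> y - \<pi> y)\<^sup>2 / \<pi> y"
    using pos by (simp add: power_divide less_imp_le)
  ultimately have "(\<Sum>y\<in>UNIV. \<bar>\<mu> y - \<pi> y\<bar>)\<^sup>2 \<le> (\<Sum>y\<in>UNIV. (\<mu> y - \<pi> y)\<^sup>2 / \<pi> y)"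
    using s1 by simp
  then have "(\<Sum>y\<in>UNIV. \<bar>\<mu> y - \<pi> y\<bar>) \<le> sqrt (\<Sum>y\<in>UNIV. (\<mu> y - \<pi> y)\<^sup>2 / \<pi> y)"
    by (simp add: real_le_rsqrt)
  then show ?thesis unfolding tvd_def by simp
qed



theorem theorem26:
  fixes P P' :: "'a::finite \<Rightarrow> 'a \<Rightarrow> real"
    and \<pi> :: "'a \<Rightarrow> real"
    and f :: "'a list \<Rightarrow> real"
    and \<epsilon> :: real and x :: 'a
  assumes "ergodic P" and "stationary P \<pi>"
    and "ergodic P'" and "stationary P' \<pi>" and "reversible P' \<pi>"
    and "is_flow P P' \<pi> f"
    and "\<epsilon> > 0" and "\<epsilon> \<le> 1"
  shows "cont_mix_time_from P \<pi> x \<epsilon>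
    \<le> flow_congestion P \<pi> P' f / 2 * (real (mix_time P' \<pi> (1 / (2 * exp 1))) + 1)
       * ln (1 / (\<epsilon>\<^sup>2 * \<pi> x))"
proof -
  note ergP = assms(1) and statP = assms(2) and ergP' = assms(3) and statP' = assms(4)
    and rev = assms(5) and flow = assms(6) and e0 = assms(7) and e1 = assms(8)
  have stP: "stochastic P" using ergP by (simp add: ergodic_def)
  have stP': "stochastic P'" using ergP' by (simp add: ergodic_def)
  have pos: "\<And>y. 0 < \<pi> y" using pi_pos[OF stP _ statP] ergP by (simp add: ergodic_def)
  have s1: "(\<Sum>y\<in>UNIV. \<pi> y) = 1" using statP by (simp add: stationary_def)
  define \<tau> where "\<tau> = mix_time P' \<pi> (1 / (2 * exp 1))"
  define A where "A = flow_congestion P \<pi> P' f"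
  define B where "B = A * (real \<tau> + 1)"
  define L where "L = ln (1 / (\<epsilon>\<^sup>2 * \<pi> x))"
  define T where "T = A / 2 * (real \<tau> + 1) * L"
  define V where "V = (\<lambda>t. \<Sum>y\<in>UNIV. (cont_kernel P t x y - \<pi> y)\<^sup>2 / \<pi> y)"
  define h where "h = (\<lambda>t y. (cont_kernel P t x y - \<pi> y) / \<pi> y)"
  define D where "D = (\<lambda>t. dirichlet P \<pi> (h t))"
  have V_ip: "V t = ip \<pi> (h t) (h t)" for t
    unfolding V_def ip_def h_def
  proof (rule sum.cong[OF refl])
    fix y
    show "(cont_kernel P t x y - \<pi> y)\<^sup>2 / \<pi> y =
       \<pi> y * ((cont_kernel P t x y - \<pi> y) / \<pi> y) * ((cont_kernel P t x y - \<pi> y) / \<pi> y)"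
      using pos[of y] by (simp add: power2_eq_square field_simps)
  qed
  have hmean: "(\<Sum>y\<in>UNIV. \<pi> y * h t y) = 0" for t
  proof -
    have "(\<Sum>y\<in>UNIV. \<pi> y * h t y) = (\<Sum>y\<in>UNIV. cont_kernel P t x y - \<pi> y)"
      unfolding h_def using pos by (intro sum.cong refl) (simp add: less_imp_neq[symmetric])
    also have "\<dots> = 0" using cont_kernel_sum[OF stP, of t x] s1 by (simp add: sum_subtractf)
    finally show ?thesis .
  qed
  have Dnn: "0 \<le> D t" for t unfolding D_def by (rule dirichlet_nonneg[OF stP]) (use pos in \<open>simp add: less_imp_le\<close>)
  have VBD: "V t \<le> B * D t" for t
  proof -
    have "ip \<pi> (h t) (h t) - (\<Sum>y\<in>UNIV. \<pi> y * h t y)\<^sup>2 \<le> (real \<tau> + 1) * dirichlet P' \<pi> (h t)"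
      unfolding \<tau>_def by (rule poincare[OF ergP' statP' rev])
    then have "V t \<le> (real \<tau> + 1) * dirichlet P' \<pi> (h t)" using hmean[of t] V_ip[of t] by simp
    also have "\<dots> \<le> (real \<tau> + 1) * (A * D t)"
      unfolding A_def D_def by (intro mult_left_mono comparison[OF stP stP' pos flow]) simp
    finally show ?thesis unfolding B_def by (simp add: mult_ac)
  qed
  have Vnn: "0 \<le> V t" for t unfolding V_def using pos by (intro sum_nonneg) (simp add: less_imp_le)
  have Vd: "(V has_real_derivative (- 2 * D t)) (at t)" for t
    unfolding V_def D_def h_def by (rule V_deriv[OF stP statP pos])
  have Ann: "0 \<le> A"
  proof -
    have "(\<Sum>y\<in>UNIV. P x y) = 1" using stP by (simp add: stochastic_def)
    then have "\<exists>y. P x y > 0"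
      by (metis (mono_tags, lifting) not_le sum_nonpos zero_less_one)
    then obtain y where y: "P x y > 0" by blast
    then have xy: "(x, y) \<in> edge_set P" by (simp add: edge_set_def)
    have fnn: "\<And>\<gamma>. \<gamma> \<in> all_paths P P' \<Longrightarrow> 0 \<le> f \<gamma>" using flow unfolding is_flow_def by auto
    have "0 \<le> flow_congestion_edge P \<pi> P' f x y"
      unfolding flow_congestion_edge_def using pos[of x] y fnn
      by (intro mult_nonneg_nonneg sum_nonneg) auto
    also have "\<dots> \<le> A" unfolding A_def flow_congestion_def
      by (rule Max_ge) (use xy in \<open>auto intro: image_eqI[of _ _ "(x,y)"]\<close>)
    finally show ?thesis .
  qed
  have Bnn: "0 \<le> B" unfolding B_def using Ann by simp
  have pix1: "\<pi> x \<le> 1"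
  proof -
    have "\<pi> x \<le> (\<Sum>y\<in>UNIV. \<pi> y)" by (rule member_le_sum) (auto simp: pos less_imp_le)
    then show ?thesis using s1 by simp
  qed
  have a0: "0 < \<epsilon>\<^sup>2 * \<pi> x" using e0 pos[of x] by simp
  have a1: "\<epsilon>\<^sup>2 * \<pi> x \<le> 1"
  proof -
    have "\<epsilon>\<^sup>2 \<le> 1" using e0 e1 by (simp add: power_le_one)
    then show ?thesis using pix1 pos[of x] by (metis mult_le_one less_imp_le zero_le_power2)
  qed
  have Lnn: "0 \<le> L" unfolding L_def using a0 a1 by simp
  have TB: "T = B * L / 2" unfolding T_def B_def by simp
  have Tnn: "0 \<le> T" unfolding TB using Bnn Lnn by simp
  have V0: "V 0 \<le> 1 / \<pi> x"
  proof -
    have "V 0 = (\<Sum>y\<in>UNIV. (if y = x then 1 / \<pi> x else 0) - 2 * (if y = x then 1 else 0) + \<pi> y)"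
      unfolding V_def cont_kernel_zero
    proof (rule sum.cong[OF refl])
      fix y
      have "\<pi> x \<noteq> 0" "\<pi> y \<noteq> 0" using pos[of x] pos[of y] by auto
      then show "((if x = y then 1 else 0) - \<pi> y)\<^sup>2 / \<pi> y =
          (if y = x then 1 / \<pi> x else 0) - 2 * (if y = x then 1 else 0) + \<pi> y"
        by (cases "y = x") (auto simp: power2_eq_square field_simps)
    qed
    also have "\<dots> = 1 / \<pi> x - 2 + 1" by (simp add: sum.distrib sum_subtractf s1)
    finally show ?thesis by simp
  qed
  have tvdV: "tvd (cont_kernel P t x) \<pi> \<le> 1/2 * sqrt (V t)" for t
    unfolding V_def by (rule tvd_V[OF pos s1])
  have good: "tvd (cont_kernel P t x) \<pi> \<le> \<epsilon>" if t: "t \<ge> T" for t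
  proof (cases "B = 0")
    case True
    then have "V t \<le> 0" using VBD[of t] by simp
    then have "V t = 0" using Vnn[of t] by simp
    then show ?thesis using tvdV[of t] e0 by simp
  next
    case False
    then have Bpos: "B > 0" using Bnn by simp
    have t0: "0 \<le> t" using t Tnn by simp
    define W where "W = (\<lambda>s. exp (2 * s / B) * V s)"
    have "W t \<le> W 0"
    proof (rule DERIV_nonpos_imp_nonincreasing[OF t0])
      fix s
      have "(W has_real_derivative (exp (2 * s / B) * (2 / B)) * V s + (- 2 * D s) * exp (2 * s / B)) (at s)"
        unfolding W_def by (rule DERIV_mult[OF _ Vd]) (use False in \<open>auto intro!: derivative_eq_intros\<close>)
      moreover have "(exp (2 * s / B) * (2 / B)) * V s + (- 2 * D s) * exp (2 * s / B) \<le> 0"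
      proof -
        have "(2 / B) * V s \<le> (2 / B) * (B * D s)" using VBD[of s] Bpos by (intro mult_left_mono) auto
        then have "(2 / B) * V s - 2 * D s \<le> 0" using Bpos by simp
        then have "exp (2 * s / B) * ((2 / B) * V s - 2 * D s) \<le> 0"
          by (simp add: mult_nonneg_nonpos)
        then show ?thesis by (simp add: algebra_simps)
      qed
      ultimately show "\<exists>y. (W has_real_derivative y) (at s) \<and> y \<le> 0" by blast
    qed
    then have Wt: "exp (2 * t / B) * V t \<le> V 0" unfolding W_def by simp
    have "L \<le> 2 * t / B" using t Bpos unfolding TB by (simp add: field_simps)
    then have "exp (- (2 * t / B)) \<le> exp (- L)" by simp
    also have "exp (- L) = \<epsilon>\<^sup>2 * \<pi> x" unfolding L_def using a0 e0 pos[of x] by (simp add: ln_div exp_minus)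
    finally have ex: "exp (- (2 * t / B)) \<le> \<epsilon>\<^sup>2 * \<pi> x" .
    have "V t = exp (- (2 * t / B)) * (exp (2 * t / B) * V t)" by (simp add: exp_minus field_simps)
    also have "\<dots> \<le> exp (- (2 * t / B)) * V 0" using Wt by (intro mult_left_mono) auto
    also have "\<dots> \<le> (\<epsilon>\<^sup>2 * \<pi> x) * (1 / \<pi> x)"
      using ex V0 Vnn[of 0] a0 by (intro mult_mono) (auto simp: less_imp_le)
    also have "\<dots> = \<epsilon>\<^sup>2" using pos[of x] by simp
    finally have "sqrt (V t) \<le> \<epsilon>" using e0 by (simp add: real_sqrt_le_iff real_le_lsqrt)
    then show ?thesis using tvdV[of t] e0 by simp
  qed
  define S where "S = {t::real. t > 0 \<and> (\<forall>t'\<ge>t. tvd (cont_kernel P t' x) \<pi> \<le> \<epsilon>)}"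
  have "Inf S \<le> T"
  proof (rule field_le_epsilon)
    fix d :: real assume d: "0 < d"
    have "T + d \<in> S" unfolding S_def using d Tnn good by auto
    moreover have "bdd_below S" unfolding S_def by (rule bdd_belowI[of _ 0]) auto
    ultimately show "Inf S \<le> T + d" by (rule cInf_lower)
  qed
  then show ?thesis unfolding cont_mix_time_from_def S_def T_def A_def \<tau>_def L_def .
qed


end
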